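(* Let $\Gamma$ be a metric graph or a tropical curve with a real structure and let $D$ be a real divisor on $\Gamma$ with $\dim|D|\ge r\ge1$. Then for each effective real divisor $E$ on $\Gamma$ with $\deg E=r$ there exists a real divisor $D'\in|D|$ with $D'\ge E$.
   Context: A metric graph is a compact connected metric space locally isometric to star-shaped sets $\{te^{2k\pi i/n}:0\le t<r\}\subset\mathbb C$; its vertices are the points of local valence $\ne2$ and its edges the components of the complement of the vertex set. A tropical curve is the union of a metric graph and finitely many unbounded edges isometric to $[0,\infty]$, each attached at its point $0$ to the metric graph. A real structure is an isometric involution $\iota$; $\overline p=\iota(p)$. A divisor on $\Gamma$ is a finite formal $\mathbb Z$-combination $D=\sum D(p)p$ of points; $\overline D(p)=D(\overline p)$ and $D$ is real if $\overline D=D$. A rational function is a continuous $f:\Gamma\to\mathbb R$ which on each edge (identified isometrically with an interval in $[0,+\infty]$) is piecewise affine with finitely many pieces and integer slopes; $\Delta(f)(p)$ is the sum of the slopes of $f$ in all directions emanating from $p$, and $\Delta(f)=\sum_p\Delta(f)(p)p$. $D_1\sim D_2$ iff $D_2-D_1=\Delta(f)$ for a rational function $f$; $|D|=\{D'\ge0:D'\sim D\}$; $\dim|D|$ is $-1$ if $|D|=\emptyset$ and otherwise the maximal $r$ such that for each effective $E$ of degree $r$ there is $D'\in|D|$ with $D'-E\ge0$. *)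

theory Defs
  imports "HOL-Analysis.Analysis"
begin

text \<open>A tropical curve is encoded by a finite model: a finite vertex set, a finite
set of edges with endpoints and lengths, and a set of legs (unbounded edges).
A bounded edge e of length len e is identified with the interval [0, len e],
0 corresponding to src e and len e to tgt e.  A leg l is identified with
[0, +infinity], 0 corresponding to src l and the point at infinity being the
vertex tgt l, which is incident to no other edge.\<close>

record ('v, 'e) tgraph =
  verts :: "'v set"
  edges :: "'e set"
  src   :: "'e \<Rightarrow> 'v"
  tgt   :: "'e \<Rightarrow> 'v"
  len   :: "'e \<Rightarrow> real"
  legs  :: "'e set"

datatype ('v, 'e) point = Vx 'v | Ed 'e real

definition adj_rel :: "('v, 'e, 'z) tgraph_scheme \<Rightarrow> ('v \<times> 'v) set" where
  "adj_rel G = (\<Union>e\<in>edges G. {(src G e, tgt G e), (tgt G e, src G e)})"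

definition trop_curve :: "('v, 'e, 'z) tgraph_scheme \<Rightarrow> bool" where
  "trop_curve G \<longleftrightarrow>
     finite (verts G) \<and> finite (edges G) \<and> verts G \<noteq> {} \<and>
     (\<forall>e\<in>edges G. src G e \<in> verts G \<and> tgt G e \<in> verts G) \<and>
     legs G \<subseteq> edges G \<and>
     (\<forall>e\<in>edges G - legs G. len G e > 0) \<and>
     (\<forall>l\<in>legs G. src G l \<noteq> tgt G l \<and>
        (\<forall>e\<in>edges G. (src G e = tgt G l \<or> tgt G e = tgt G l) \<longrightarrow> e = l)) \<and>
     (\<forall>v\<in>verts G. \<forall>w\<in>verts G. (v, w) \<in> (adj_rel G)\<^sup>*)"

definition metric_graph :: "('v, 'e, 'z) tgraph_scheme \<Rightarrow> bool" where
  "metric_graph G \<longleftrightarrow> trop_curve G \<and> legs G = {}"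

definition pts :: "('v, 'e, 'z) tgraph_scheme \<Rightarrow> ('v, 'e) point set" where
  "pts G = Vx ` verts G
     \<union> {Ed e t | e t. e \<in> edges G - legs G \<and> 0 < t \<and> t < len G e}
     \<union> {Ed l t | l t. l \<in> legs G \<and> 0 < t}"

definition epos :: "('v, 'e, 'z) tgraph_scheme \<Rightarrow> 'e \<Rightarrow> real \<Rightarrow> ('v, 'e) point" where
  "epos G e t = (if t = 0 then Vx (src G e)
                 else if e \<notin> legs G \<and> t = len G e then Vx (tgt G e)
                 else Ed e t)"

text \<open>An isometric involution, given combinatorially: an involution on vertices,
an involution on edges preserving lengths and legs, and for each edge a flag
telling whether the edge is mapped with reversed orientation.\<close>

record ('v, 'e) rstruct =
  ivert :: "'v \<Rightarrow> 'v"
  iedge :: "'e \<Rightarrow> 'e"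
  flip  :: "'e \<Rightarrow> bool"

definition real_structure ::
  "('v, 'e, 'z) tgraph_scheme \<Rightarrow> ('v, 'e, 'y) rstruct_scheme \<Rightarrow> bool" where
  "real_structure G R \<longleftrightarrow>
     (\<forall>v\<in>verts G. ivert R v \<in> verts G \<and> ivert R (ivert R v) = v) \<and>
     (\<forall>e\<in>edges G. iedge R e \<in> edges G \<and> iedge R (iedge R e) = e \<and>
        flip R (iedge R e) = flip R e \<and>
        (iedge R e \<in> legs G \<longleftrightarrow> e \<in> legs G) \<and>
        len G (iedge R e) = len G e \<and>
        (e \<in> legs G \<longrightarrow> \<not> flip R e) \<and>
        (if flip R e
         then src G (iedge R e) = ivert R (tgt G e) \<and> tgt G (iedge R e) = ivert R (src G e)
         else src G (iedge R e) = ivert R (src G e) \<and> tgt G (iedge R e) = ivert R (tgt G e)))"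

fun iota :: "('v, 'e, 'z) tgraph_scheme \<Rightarrow> ('v, 'e, 'y) rstruct_scheme \<Rightarrow>
    ('v, 'e) point \<Rightarrow> ('v, 'e) point" where
  "iota G R (Vx v) = Vx (ivert R v)"
| "iota G R (Ed e t) = (if flip R e then Ed (iedge R e) (len G e - t) else Ed (iedge R e) t)"

type_synonym ('v, 'e) divisor = "('v, 'e) point \<Rightarrow> int"

definition is_divisor :: "('v, 'e, 'z) tgraph_scheme \<Rightarrow> ('v, 'e) divisor \<Rightarrow> bool" where
  "is_divisor G D \<longleftrightarrow> finite {p. D p \<noteq> 0} \<and> {p. D p \<noteq> 0} \<subseteq> pts G"

definition deg :: "('v, 'e) divisor \<Rightarrow> int" where
  "deg D = (\<Sum>p\<in>{p. D p \<noteq> 0}. D p)"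

definition effective :: "('v, 'e) divisor \<Rightarrow> bool" where
  "effective D \<longleftrightarrow> (\<forall>p. 0 \<le> D p)"

definition conj_div :: "('v, 'e, 'z) tgraph_scheme \<Rightarrow> ('v, 'e, 'y) rstruct_scheme \<Rightarrow>
    ('v, 'e) divisor \<Rightarrow> ('v, 'e) divisor" where
  "conj_div G R D = (\<lambda>p. D (iota G R p))"

definition real_divisor :: "('v, 'e, 'z) tgraph_scheme \<Rightarrow> ('v, 'e, 'y) rstruct_scheme \<Rightarrow>
    ('v, 'e) divisor \<Rightarrow> bool" where
  "real_divisor G R D \<longleftrightarrow> (\<forall>p\<in>pts G. conj_div G R D p = D p)"

definition pw_affine_int :: "real set \<Rightarrow> (real \<Rightarrow> real) \<Rightarrow> bool" where
  "pw_affine_int P g \<longleftrightarrow>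
     (\<forall>a\<in>P. \<forall>b\<in>P. a < b \<and> {a<..<b} \<inter> P = {} \<longrightarrow>
        (\<exists>c (m::int). \<forall>t\<in>{a..b}. g t = c + of_int m * t))"

definition rational_fn :: "('v, 'e, 'z) tgraph_scheme \<Rightarrow> (('v, 'e) point \<Rightarrow> real) \<Rightarrow> bool" where
  "rational_fn G f \<longleftrightarrow>
     (\<forall>e\<in>edges G - legs G. \<exists>P. finite P \<and> {0, len G e} \<subseteq> P \<and> P \<subseteq> {0..len G e} \<and>
        pw_affine_int P (\<lambda>t. f (epos G e t))) \<and>
     (\<forall>l\<in>legs G. \<exists>P. finite P \<and> 0 \<in> P \<and> P \<subseteq> {0..} \<and>
        pw_affine_int P (\<lambda>t. f (epos G l t)) \<and>
        (\<exists>c (m::int). \<forall>t\<in>{Max P..}. f (epos G l t) = c + of_int m * t) \<and>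
        ((\<lambda>t. f (epos G l t)) \<longlongrightarrow> f (Vx (tgt G l))) at_top)"

definition rslope :: "(real \<Rightarrow> real) \<Rightarrow> real \<Rightarrow> real" where
  "rslope g t = (THE m. (g has_real_derivative m) (at_right t))"

definition slope_at_top :: "(real \<Rightarrow> real) \<Rightarrow> real" where
  "slope_at_top g = (THE m. \<forall>\<^sub>F t in at_top. (g has_real_derivative m) (at t))"

text \<open>Laplacian: sum of outgoing slopes in all directions emanating from a point.\<close>

fun lap :: "('v, 'e, 'z) tgraph_scheme \<Rightarrow> (('v, 'e) point \<Rightarrow> real) \<Rightarrow> ('v, 'e) point \<Rightarrow> real" where
  "lap G f (Vx v) =
     (\<Sum>e\<in>{e\<in>edges G. src G e = v}. rslope (\<lambda>t. f (epos G e t)) 0)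
   + (\<Sum>e\<in>{e\<in>edges G - legs G. tgt G e = v}. rslope (\<lambda>s. f (epos G e (len G e - s))) 0)
   + (\<Sum>l\<in>{l\<in>legs G. tgt G l = v}. - slope_at_top (\<lambda>t. f (epos G l t)))"
| "lap G f (Ed e t) = rslope (\<lambda>s. f (epos G e s)) t + rslope (\<lambda>s. f (epos G e (- s))) (- t)"

definition lin_equiv :: "('v, 'e, 'z) tgraph_scheme \<Rightarrow> ('v, 'e) divisor \<Rightarrow> ('v, 'e) divisor \<Rightarrow> bool" where
  "lin_equiv G D1 D2 \<longleftrightarrow>
     (\<exists>f. rational_fn G f \<and> (\<forall>p\<in>pts G. real_of_int (D2 p - D1 p) = lap G f p))"

definition linsys :: "('v, 'e, 'z) tgraph_scheme \<Rightarrow> ('v, 'e) divisor \<Rightarrow> ('v, 'e) divisor set" where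
  "linsys G D = {D'. is_divisor G D' \<and> effective D' \<and> lin_equiv G D D'}"

definition div_dim :: "('v, 'e, 'z) tgraph_scheme \<Rightarrow> ('v, 'e) divisor \<Rightarrow> int" where
  "div_dim G D = (if linsys G D = {} then -1 else
     int (GREATEST r::nat. \<forall>E. is_divisor G E \<and> effective E \<and> deg E = int r \<longrightarrow>
            (\<exists>D'\<in>linsys G D. \<forall>p. E p \<le> D' p)))"

end

theory Submission
  imports Defs
begin


definition aff :: "(real \<Rightarrow> real) \<Rightarrow> real set \<Rightarrow> bool" where
  "aff g S \<longleftrightarrow> (\<exists>c (m::int). \<forall>t\<in>S. g t = c + of_int m * t)"

definition rd :: "(real \<Rightarrow> real) \<Rightarrow> real \<Rightarrow> real \<Rightarrow> bool" where
  "rd u t m \<longleftrightarrow> (\<exists>d>0. \<exists>c. \<forall>s\<in>{t..t+d}. u s = c + m * s)"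

definition ld :: "(real \<Rightarrow> real) \<Rightarrow> real \<Rightarrow> real \<Rightarrow> bool" where
  "ld u t m \<longleftrightarrow> (\<exists>d>0. \<exists>c. \<forall>s\<in>{t-d..t}. u s = c + m * s)"

lemma rd_deriv:
  assumes "rd u t m" shows "(u has_real_derivative m) (at_right t)"
proof -
  obtain d c where d: "d > 0" and h: "\<And>s. s\<in>{t..t+d} \<Longrightarrow> u s = c + m * s"
    using assms unfolding rd_def by blast
  have ev: "\<forall>\<^sub>F y in at_right t. (u y - u t) / (y - t) = m"
  proof (rule eventually_at_rightI[where b="t+d"])
    fix y assume "y \<in> {t<..<t+d}"
    then have y: "y > t" "y < t + d" by auto
    then have "u y = c + m*y" "u t = c + m*t" using h d by auto
    then show "(u y - u t) / (y - t) = m" using y by (simp add: field_simps)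
  qed (use d in auto)
  show ?thesis unfolding has_field_derivative_iff
    by (rule Lim_transform_eventually[OF tendsto_const]) (use ev in \<open>auto elim: eventually_mono\<close>)
qed

lemma rslope_unique:
  assumes "(u has_real_derivative m) (at_right t)" shows "rslope u t = m"
  unfolding rslope_def
proof (rule the_equality)
  show "(u has_real_derivative m) (at_right t)" by (rule assms)
  fix m' assume "(u has_real_derivative m') (at_right t)"
  then show "m' = m" using assms unfolding has_field_derivative_iff
    using tendsto_unique trivial_limit_at_right_real by blast
qed

lemma rd_rslope: "rd u t m \<Longrightarrow> rslope u t = m"
  by (rule rslope_unique[OF rd_deriv])

lemma rd_le:
  assumes "rd u t mu" "rd w t mw" "u t = w t" "\<And>s. w s \<le> u s"
  shows "mw \<le> mu"
proof -
  obtain d1 c1 where d1: "d1 > 0" and h1: "\<And>s. s\<in>{t..t+d1} \<Longrightarrow> u s = c1 + mu * s"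
    using assms(1) unfolding rd_def by blast
  obtain d2 c2 where d2: "d2 > 0" and h2: "\<And>s. s\<in>{t..t+d2} \<Longrightarrow> w s = c2 + mw * s"
    using assms(2) unfolding rd_def by blast
  define s where "s = t + min d1 d2"
  have "u s = c1 + mu * s" "w s = c2 + mw * s" "u t = c1 + mu * t" "w t = c2 + mw * t"
    using h1 h2 d1 d2 by (auto simp: s_def)
  moreover have "s > t" using d1 d2 by (simp add: s_def)
  ultimately have "(mu - mw) * (s - t) \<ge> 0" using assms(3) assms(4)[of s] by (simp add: algebra_simps)
  then show ?thesis using \<open>s > t\<close> by (simp add: zero_le_mult_iff)
qed

lemma ld_reflect:
  assumes "ld u t m" shows "rd (\<lambda>s. u (a - s)) (a - t) (- m)"
proof -
  obtain d c where d: "d > 0" and h: "\<And>s. s\<in>{t-d..t} \<Longrightarrow> u s = c + m * s"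
    using assms unfolding ld_def by blast
  show ?thesis unfolding rd_def
    by (rule exI[of _ d], use d in simp, rule exI[of _ "c + m*a"]) (auto simp: h algebra_simps)
qed

lemma ld_reflect0:
  assumes "ld u t m" shows "rd (\<lambda>s. u (- s)) (- t) (- m)"
  using ld_reflect[OF assms, of 0] by simp

lemma rslope_shift: "rslope (\<lambda>s. u (s + c)) t = rslope u (t + c)"
proof -
  have "((\<lambda>s. u (s + c)) has_real_derivative m) (at_right t) \<longleftrightarrow> (u has_real_derivative m) (at_right (t + c))" for m
    unfolding has_field_derivative_iff filterlim_at_right_to_0[of _ _ t] filterlim_at_right_to_0[of _ _ "t+c"]
    by (simp add: add.commute add.left_commute)
  then show ?thesis unfolding rslope_def by simp
qed



definition Qp :: "(real \<Rightarrow> real) \<Rightarrow> real set \<Rightarrow> real set \<Rightarrow> bool" where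
  "Qp g S P \<longleftrightarrow> (\<forall>a b. a \<in> S \<and> b \<in> S \<and> a < b \<and> {a<..<b} \<inter> P = {} \<longrightarrow> aff g {a..b})"

lemma Qp_mono: "Qp g S P1 \<Longrightarrow> P1 \<subseteq> P \<Longrightarrow> Qp g S P"
  unfolding Qp_def by blast

lemma aff_sub: "aff g A \<Longrightarrow> B \<subseteq> A \<Longrightarrow> aff g B"
  unfolding aff_def by blast

lemma aff_rd: assumes "aff g {t..b}" "t < b" shows "\<exists>m::int. rd g t (of_int m)"
proof -
  obtain c m where cm: "\<forall>s\<in>{t..b}. g s = c + of_int (m::int) * s" using assms(1) unfolding aff_def by blast
  have "rd g t (of_int m)" unfolding rd_def
    by (rule exI[of _ "b - t"]) (use assms(2) cm in auto)
  then show ?thesis by blast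
qed

lemma aff_ld: assumes "aff g {a..t}" "a < t" shows "\<exists>m::int. ld g t (of_int m)"
proof -
  obtain c m where cm: "\<forall>s\<in>{a..t}. g s = c + of_int (m::int) * s" using assms(1) unfolding aff_def by blast
  have "ld g t (of_int m)" unfolding ld_def
    by (rule exI[of _ "t - a"]) (use assms(2) cm in auto)
  then show ?thesis by blast
qed

lemma Qp_right:
  assumes "finite P" "Qp g S P" "t \<in> S" "t < s" "{t..s} \<subseteq> S"
  shows "\<exists>m::int. rd g t (of_int m)"
proof -
  define b where "b = Min ({s} \<union> {x\<in>P. x > t})"
  have fin: "finite ({s} \<union> {x\<in>P. x > t})" using assms(1) by auto
  have bs: "b \<le> s" unfolding b_def using fin by (simp add: Min_le_iff)
  have bt: "t < b" unfolding b_def using fin assms(4) by (auto simp: Min_gr_iff)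
  have emp: "{t<..<b} \<inter> P = {}"
  proof (rule ccontr)
    assume "{t<..<b} \<inter> P \<noteq> {}"
    then obtain x where "x \<in> P" "t < x" "x < b" by auto
    moreover have "b \<le> x" unfolding b_def using fin \<open>x\<in>P\<close> \<open>t<x\<close> by (intro Min_le) auto
    ultimately show False by simp
  qed
  have "b \<in> S" using bs bt assms(5) by auto
  then have "aff g {t..b}" using assms(2,3) bt emp unfolding Qp_def by blast
  then show ?thesis using aff_rd bt by blast
qed

lemma Qp_left:
  assumes "finite P" "Qp g S P" "t \<in> S" "s < t" "{s..t} \<subseteq> S"
  shows "\<exists>m::int. ld g t (of_int m)"
proof -
  define a where "a = Max ({s} \<union> {x\<in>P. x < t})"
  have fin: "finite ({s} \<union> {x\<in>P. x < t})" using assms(1) by auto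
  have bs: "s \<le> a" unfolding a_def using fin by (intro Max_ge) auto
  have bt: "a < t" unfolding a_def using fin assms(4) by (auto simp: Max_less_iff)
  have emp: "{a<..<t} \<inter> P = {}"
  proof (rule ccontr)
    assume "{a<..<t} \<inter> P \<noteq> {}"
    then obtain x where "x \<in> P" "a < x" "x < t" by auto
    moreover have "x \<le> a" unfolding a_def using fin \<open>x\<in>P\<close> \<open>x<t\<close> by (intro Max_ge) auto
    ultimately show False by simp
  qed
  have "a \<in> S" using bs bt assms(5) by auto
  then have "aff g {a..t}" using assms(2,3) bt emp unfolding Qp_def by blast
  then show ?thesis using aff_ld bt by blast
qed

lemma Qp_mid:
  assumes "finite P" "Qp g S P" "t \<notin> P" "s1 < t" "t < s2" "{s1..s2} \<subseteq> S"
  shows "\<exists>m::int. rd g t (of_int m) \<and> ld g t (of_int m)"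
proof -
  define a where "a = Max ({s1} \<union> {x\<in>P. x < t})"
  define b where "b = Min ({s2} \<union> {x\<in>P. x > t})"
  have fina: "finite ({s1} \<union> {x\<in>P. x < t})" using assms(1) by auto
  have finb: "finite ({s2} \<union> {x\<in>P. x > t})" using assms(1) by auto
  have as: "s1 \<le> a" unfolding a_def using fina by (intro Max_ge) auto
  have at: "a < t" unfolding a_def using fina assms(4) by (auto simp: Max_less_iff)
  have bs: "b \<le> s2" unfolding b_def using finb by (simp add: Min_le_iff)
  have bt: "t < b" unfolding b_def using finb assms(5) by (auto simp: Min_gr_iff)
  have emp: "{a<..<b} \<inter> P = {}"
  proof (rule ccontr)
    assume "{a<..<b} \<inter> P \<noteq> {}"
    then obtain x where x: "x \<in> P" "a < x" "x < b" by auto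
    show False
    proof (cases "x < t")
      case True
      have "x \<le> a" unfolding a_def using fina x True by (intro Max_ge) auto
      then show False using x by simp
    next
      case False
      then have "x > t" using x assms(3) by (cases "x = t") auto
      have "b \<le> x" unfolding b_def using finb x \<open>x > t\<close> by (intro Min_le) auto
      then show False using x by simp
    qed
  qed
  have "a \<in> S" "b \<in> S" using as at bs bt assms(4,5,6) by auto
  then have af: "aff g {a..b}" using assms(2) at bt emp unfolding Qp_def by force
  then obtain c m where cm: "\<forall>x\<in>{a..b}. g x = c + of_int m * x" unfolding aff_def by blast
  have "rd g t (of_int m)" unfolding rd_def
    by (rule exI[of _ "b - t"]) (use bt at cm in auto)
  moreover have "ld g t (of_int m)" unfolding ld_def
    by (rule exI[of _ "t - a"]) (use bt at cm in auto)
  ultimately show ?thesis by blast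
qed

lemma pw_Qp_edge:
  assumes "finite P" "{0, L} \<subseteq> P" "P \<subseteq> {0..L}" "pw_affine_int P g"
  shows "Qp g {0..L} P"
  unfolding Qp_def
proof (intro allI impI)
  fix a b assume ab: "a \<in> {0..L} \<and> b \<in> {0..L} \<and> a < b \<and> {a<..<b} \<inter> P = {}"
  define a1 where "a1 = Max {x\<in>P. x \<le> a}"
  define b1 where "b1 = Min {x\<in>P. x \<ge> b}"
  have fa: "finite {x\<in>P. x \<le> a}" "{x\<in>P. x \<le> a} \<noteq> {}" using assms ab by auto
  have fb: "finite {x\<in>P. x \<ge> b}" "{x\<in>P. x \<ge> b} \<noteq> {}" using assms ab by auto
  have a1: "a1 \<in> P" "a1 \<le> a" using Max_in[OF fa] unfolding a1_def by auto
  have b1: "b1 \<in> P" "b \<le> b1" using Min_in[OF fb] unfolding b1_def by auto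
  have "{a1<..<b1} \<inter> P = {}"
  proof (rule ccontr)
    assume "{a1<..<b1} \<inter> P \<noteq> {}"
    then obtain z where z: "z \<in> P" "a1 < z" "z < b1" by auto
    show False
    proof (cases "z \<le> a")
      case True then have "z \<le> a1" unfolding a1_def using fa by (intro Max_ge) (auto simp: z)
      then show False using z by simp
    next
      case False
      show False
      proof (cases "z \<ge> b")
        case True then have "b1 \<le> z" unfolding b1_def using fb by (intro Min_le) (auto simp: z)
        then show False using z by simp
      next
        case False2: False
        then have "z \<in> {a<..<b} \<inter> P" using False z by auto
        then show False using ab by blast
      qed
    qed
  qed
  moreover have "a1 < b1" using a1 b1 ab by simp
  ultimately have "aff g {a1..b1}" using assms(4) a1 b1 unfolding pw_affine_int_def aff_def by blast
  then show "aff g {a..b}" by (rule aff_sub) (use a1 b1 in auto)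
qed

lemma pw_Qp_leg:
  assumes "finite P" "0 \<in> P" "P \<subseteq> {0..}" "pw_affine_int P g" "aff g {Max P..}"
  shows "Qp g {0..} P"
  unfolding Qp_def
proof (intro allI impI)
  fix a b assume ab: "a \<in> {0..} \<and> b \<in> {0..} \<and> a < b \<and> {a<..<b} \<inter> P = {}"
  show "aff g {a..b}"
  proof (cases "\<exists>x\<in>P. x \<ge> b")
    case False
    then have "\<forall>x\<in>P. x \<le> a" using ab by force
    then have "Max P \<le> a" using assms(1,2) by (subst Max_le_iff) auto
    then have "{a..b} \<subseteq> {Max P..}" by auto
    then show ?thesis by (rule aff_sub[OF assms(5)])
  next
    case True
    define a1 where "a1 = Max {x\<in>P. x \<le> a}"
    define b1 where "b1 = Min {x\<in>P. x \<ge> b}"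
    have fa: "finite {x\<in>P. x \<le> a}" "{x\<in>P. x \<le> a} \<noteq> {}" using assms ab by auto
    have fb: "finite {x\<in>P. x \<ge> b}" "{x\<in>P. x \<ge> b} \<noteq> {}" using assms True by auto
    have a1: "a1 \<in> P" "a1 \<le> a" using Max_in[OF fa] unfolding a1_def by auto
    have b1: "b1 \<in> P" "b \<le> b1" using Min_in[OF fb] unfolding b1_def by auto
    have "{a1<..<b1} \<inter> P = {}"
    proof (rule ccontr)
      assume "{a1<..<b1} \<inter> P \<noteq> {}"
      then obtain z where z: "z \<in> P" "a1 < z" "z < b1" by auto
      show False
      proof (cases "z \<le> a")
        case True then have "z \<le> a1" unfolding a1_def using fa by (intro Max_ge) (auto simp: z)
        then show False using z by simp
      next
        case False
        show False
        proof (cases "z \<ge> b")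
          case True then have "b1 \<le> z" unfolding b1_def using fb by (intro Min_le) (auto simp: z)
          then show False using z by simp
        next
          case False2: False
          then have "z \<in> {a<..<b} \<inter> P" using False z by auto
        then show False using ab by blast
        qed
      qed
    qed
    moreover have "a1 < b1" using a1 b1 ab by simp
    ultimately have "aff g {a1..b1}" using assms(4) a1 b1 unfolding pw_affine_int_def aff_def by blast
    then show "aff g {a..b}" by (rule aff_sub) (use a1 b1 in auto)
  qed
qed

lemma Qp_pw: "Qp g S P \<Longrightarrow> P \<subseteq> S \<Longrightarrow> pw_affine_int P g"
  unfolding Qp_def pw_affine_int_def aff_def by blast

lemma pw_reflect:
  assumes "pw_affine_int P g"
  shows "pw_affine_int ((\<lambda>t. L - t) ` P) (\<lambda>t. g (L - t))"
  unfolding pw_affine_int_def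
proof (intro ballI impI)
  fix a b assume a: "a \<in> (\<lambda>t. L - t) ` P" and b: "b \<in> (\<lambda>t. L - t) ` P"
    and ab: "a < b \<and> {a<..<b} \<inter> (\<lambda>t. L - t) ` P = {}"
  have aP: "L - a \<in> P" and bP: "L - b \<in> P" using a b by auto
  have "{L - b<..<L - a} \<inter> P = {}"
  proof (rule ccontr)
    assume "{L - b<..<L - a} \<inter> P \<noteq> {}"
    then obtain z where "z \<in> P" "L - b < z" "z < L - a" by auto
    then have "L - z \<in> {a<..<b} \<inter> (\<lambda>t. L - t) ` P" by auto
    then show False using ab by blast
  qed
  then obtain c m where cm: "\<forall>t\<in>{L-b..L-a}. g t = c + of_int (m::int) * t"
    using assms aP bP ab unfolding pw_affine_int_def by force
  show "\<exists>c (m::int). \<forall>t\<in>{a..b}. g (L - t) = c + of_int m * t"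
    by (rule exI[of _ "c + of_int m * L"], rule exI[of _ "-m"]) (use cm in \<open>auto simp: algebra_simps\<close>)
qed



lemma lin_sign:
  fixes c m t1 t2 :: real
  assumes "c + m*t1 < 0" "c + m*t2 > 0"
  shows "m \<noteq> 0 \<and> min t1 t2 < -c/m \<and> -c/m < max t1 t2"
proof -
  have m: "m \<noteq> 0" using assms by auto
  have e1: "m * (t1 + c/m) < 0" and e2: "m * (t2 + c/m) > 0"
    using assms m by (simp_all add: algebra_simps)
  show ?thesis
  proof (cases "m > 0")
    case True
    then have "t1 + c/m < 0" "t2 + c/m > 0" using e1 e2 by (simp_all add: mult_less_0_iff zero_less_mult_iff)
    then show ?thesis using m by auto
  next
    case False
    then have "m < 0" using m by simp
    then have "t1 + c/m > 0" "t2 + c/m < 0" using e1 e2 by (simp_all add: mult_less_0_iff zero_less_mult_iff)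
    then show ?thesis using m by auto
  qed
qed

lemma Qp_max:
  assumes fin: "finite P0" and Q1: "Qp g1 S P0" and Q2: "Qp g2 S P0"
    and conv: "\<And>x y z. x \<in> S \<Longrightarrow> z \<in> S \<Longrightarrow> x \<le> y \<Longrightarrow> y \<le> z \<Longrightarrow> y \<in> S"
    and lo: "lo \<in> P0" "S \<subseteq> {lo..}" and sub: "P0 \<subseteq> S"
  shows "\<exists>C. finite C \<and> C \<subseteq> S \<and> Qp (\<lambda>t. max (g1 t) (g2 t)) S (P0 \<union> C)"
proof -
  define C where "C = {x\<in>S. x \<notin> P0 \<and> g1 x = g2 x \<and>
     (\<exists>y\<in>S. g1 y \<noteq> g2 y \<and> {min x y<..<max x y} \<inter> P0 = {})}"
  define F where "F x = Max {a\<in>P0. a < x}" for x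
  have Fp: "F x \<in> P0 \<and> F x < x \<and> (\<forall>z\<in>P0. z < x \<longrightarrow> z \<le> F x)" if "x \<in> C" for x
  proof -
    have "lo < x" using that lo unfolding C_def by (cases "lo = x") auto
    then have ne: "{a\<in>P0. a < x} \<noteq> {}" "finite {a\<in>P0. a < x}" using lo fin by auto
    show ?thesis using Max_in[OF ne(2,1)] Max_ge[OF ne(2)] unfolding F_def by auto
  qed
  have inj: "inj_on F C"
  proof -
    have *: "x = x'" if x: "x \<in> C" and x': "x' \<in> C" and eq: "F x = F x'" and lt: "x \<le> x'" for x x'
    proof (rule ccontr)
      assume "x \<noteq> x'"
      with lt have lt: "x < x'" by simp
      define a where "a = F x"
      have ax: "a \<in> P0" "a < x" "\<forall>z\<in>P0. z < x \<longrightarrow> z \<le> a" using Fp[OF x] by (auto simp: a_def)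
      have ax': "\<forall>z\<in>P0. z < x' \<longrightarrow> z \<le> a" using Fp[OF x'] eq by (auto simp: a_def)
      obtain y where y: "y \<in> S" "g1 y \<noteq> g2 y" "{min x y<..<max x y} \<inter> P0 = {}"
        using x unfolding C_def by blast
      have xS: "x \<in> S" "x' \<in> S" "x \<notin> P0" "x' \<notin> P0" "g1 x = g2 x" "g1 x' = g2 x'"
        using x x' unfolding C_def by auto
      have ya: "a \<le> y"
      proof (rule ccontr)
        assume "\<not> a \<le> y"
        then have "a \<in> {min x y<..<max x y}" using ax by auto
        then show False using y(3) ax(1) by blast
      qed
      define B where "B = max x' y"
      have aS: "a \<in> S" using ax sub by auto
      have BS: "B \<in> S" using xS y by (auto simp: B_def max_def)
      have aB: "a < B" using ax lt by (auto simp: B_def)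
      have emp: "{a<..<B} \<inter> P0 = {}"
      proof (rule ccontr)
        assume "{a<..<B} \<inter> P0 \<noteq> {}"
        then obtain z where z: "z \<in> P0" "a < z" "z < B" by auto
        have "\<not> z < x'" using ax' z by (meson not_le)
        then have "z > x'" using z xS by (cases "z = x'") auto
        then have "z < y" using z by (auto simp: B_def)
        then have "z \<in> {min x y<..<max x y}" using \<open>z > x'\<close> lt by auto
        then show False using y(3) z by blast
      qed
      obtain c1 m1 where h1: "\<forall>t\<in>{a..B}. g1 t = c1 + of_int (m1::int) * t"
        using Q1 aS BS aB emp unfolding Qp_def aff_def by blast
      obtain c2 m2 where h2: "\<forall>t\<in>{a..B}. g2 t = c2 + of_int (m2::int) * t"
        using Q2 aS BS aB emp unfolding Qp_def aff_def by blast
      have inr: "x \<in> {a..B}" "x' \<in> {a..B}" "y \<in> {a..B}" using ax lt ya by (auto simp: B_def)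
      have "c1 + m1 * x = c2 + m2 * x" "c1 + m1 * x' = c2 + m2 * x'"
        using h1 h2 inr xS by auto
      then have "(m1 - m2) * (x' - x) = 0" by (simp add: algebra_simps)
      then have "m1 = m2" using lt by simp
      then have "c1 = c2" using \<open>c1 + m1 * x = c2 + m2 * x\<close> by simp
      then have "g1 y = g2 y" using h1 h2 inr \<open>m1 = m2\<close> by simp
      then show False using y by simp
    qed
    show ?thesis unfolding inj_on_def
    proof (intro ballI impI)
      fix x x' assume "x \<in> C" "x' \<in> C" "F x = F x'"
      then show "x = x'" using *[of x x'] *[of x' x] by (cases "x \<le> x'") auto
    qed
  qed
  have finC: "finite C"
  proof -
    have "F ` C \<subseteq> P0" using Fp by auto
    then have "finite (F ` C)" using fin finite_subset by blast
    then show ?thesis using finite_imageD inj by blast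
  qed
  have "Qp (\<lambda>t. max (g1 t) (g2 t)) S (P0 \<union> C)"
    unfolding Qp_def
  proof (intro allI impI)
    fix a b assume ab: "a \<in> S \<and> b \<in> S \<and> a < b \<and> {a<..<b} \<inter> (P0 \<union> C) = {}"
    then have ab0: "{a<..<b} \<inter> P0 = {}" by blast
    obtain c1 m1 where h1: "\<forall>t\<in>{a..b}. g1 t = c1 + of_int (m1::int) * t"
      using Q1 ab ab0 unfolding Qp_def aff_def by blast
    obtain c2 m2 where h2: "\<forall>t\<in>{a..b}. g2 t = c2 + of_int (m2::int) * t"
      using Q2 ab ab0 unfolding Qp_def aff_def by blast
    have cl: "(\<forall>t\<in>{a..b}. g2 t \<le> g1 t) \<or> (\<forall>t\<in>{a..b}. g1 t \<le> g2 t)"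
    proof (rule ccontr)
      assume "\<not> ?thesis"
      then obtain t1 t2 where t: "t1 \<in> {a..b}" "t2 \<in> {a..b}" "g1 t1 < g2 t1" "g1 t2 > g2 t2"
        by (auto simp: not_le)
      define c where "c = c1 - c2"
      define m where "m = real_of_int m1 - of_int m2"
      have dd: "g1 t - g2 t = c + m * t" if "t \<in> {a..b}" for t
        using h1 h2 that by (simp add: c_def m_def algebra_simps)
      have "c + m*t1 < 0" "c + m*t2 > 0" using dd[OF t(1)] dd[OF t(2)] t by auto
      from lin_sign[OF this] have ls: "m \<noteq> 0" "min t1 t2 < -c/m" "-c/m < max t1 t2" by auto
      define x where "x = -c/m"
      have xab: "x \<in> {a<..<b}" using ls t by (auto simp: x_def)
      have aSS: "a \<in> S" "b \<in> S" using ab by auto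
      have xS: "x \<in> S" using conv[OF aSS] xab by auto
      have "c + m * x = 0" using ls by (simp add: x_def)
      then have gx: "g1 x = g2 x" using dd[of x] xab by auto
      have xP: "x \<notin> P0" using ab0 xab by blast
      have "{min x t2<..<max x t2} \<subseteq> {a<..<b}" using xab t by auto
      then have "{min x t2<..<max x t2} \<inter> P0 = {}" using ab0 by blast
      moreover have "t2 \<in> S" using conv[OF aSS] t by auto
      ultimately have "x \<in> C" unfolding C_def using xS gx xP t(4) by (intro CollectI conjI bexI[of _ t2]) auto
      then show False using ab xab by blast
    qed
    show "aff (\<lambda>t. max (g1 t) (g2 t)) {a..b}"
    proof (cases "\<forall>t\<in>{a..b}. g2 t \<le> g1 t")
      case True
      show ?thesis unfolding aff_def
        by (rule exI[of _ c1], rule exI[of _ m1]) (use True h1 in \<open>auto simp: max_def\<close>)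
    next
      case False
      then have F: "\<forall>t\<in>{a..b}. g1 t \<le> g2 t" using cl by blast
      show ?thesis unfolding aff_def
        by (rule exI[of _ c2], rule exI[of _ m2]) (use F h2 in \<open>auto simp: max_def\<close>)
    qed
  qed
  moreover have "C \<subseteq> S" unfolding C_def by auto
  ultimately show ?thesis using finC by blast
qed



lemma tc_len: "trop_curve G \<Longrightarrow> e \<in> edges G \<Longrightarrow> e \<notin> legs G \<Longrightarrow> len G e > 0"
  unfolding trop_curve_def by blast

lemma tc_legs: "trop_curve G \<Longrightarrow> legs G \<subseteq> edges G"
  unfolding trop_curve_def by blast

lemma pts_Vx: "Vx v \<in> pts G \<longleftrightarrow> v \<in> verts G"
  unfolding pts_def by auto

lemma pts_Ed: "trop_curve G \<Longrightarrow> Ed e t \<in> pts G \<longleftrightarrow> e \<in> edges G \<and> 0 < t \<and> (e \<in> legs G \<or> t < len G e)"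
  using tc_legs[of G] unfolding pts_def by auto

lemma epos_Ed: "0 < t \<Longrightarrow> (e \<in> legs G \<or> t < len G e) \<Longrightarrow> epos G e t = Ed e t"
  unfolding epos_def by auto

lemma epos_0: "epos G e 0 = Vx (src G e)"
  unfolding epos_def by simp

lemma epos_len: "e \<notin> legs G \<Longrightarrow> len G e \<noteq> 0 \<Longrightarrow> epos G e (len G e) = Vx (tgt G e)"
  unfolding epos_def by simp

definition Srng :: "('v, 'e, 'z) tgraph_scheme \<Rightarrow> 'e \<Rightarrow> real set" where
  "Srng G e = (if e \<in> legs G then {0..} else {0..len G e})"

lemma lin_tendsto_slope0:
  fixes F :: "real \<Rightarrow> real"
  assumes "\<forall>t\<in>{M..}. F t = c + m * t" "(F \<longlongrightarrow> L) at_top"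
  shows "m = 0"
proof (rule ccontr)
  assume m: "m \<noteq> 0"
  have "\<forall>\<^sub>F t in at_top. dist (F t) L < 1" using tendstoD[OF assms(2), of 1] by simp
  then obtain N where N: "\<And>t. t \<ge> N \<Longrightarrow> dist (F t) L < 1" unfolding eventually_at_top_linorder by blast
  define T where "T = max N M"
  define t2 where "t2 = T + 3 / \<bar>m\<bar>"
  have pos: "3 / \<bar>m\<bar> > 0" using m by simp
  have T1: "T \<ge> N" "T \<ge> M" by (auto simp: T_def)
  have "t2 \<ge> T" unfolding t2_def using pos by linarith
  then have T: "T \<ge> N" "T \<ge> M" "t2 \<ge> N" "t2 \<ge> M" using T1 by linarith+
  have "F t2 - F T = m * (3 / \<bar>m\<bar>)" using assms(1) T by (simp add: t2_def algebra_simps)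
  then have "\<bar>F t2 - F T\<bar> = 3" using m by (simp add: abs_mult)
  moreover have "\<bar>F t2 - L\<bar> < 1" "\<bar>F T - L\<bar> < 1" using N T by (auto simp: dist_real_def)
  ultimately show False by linarith
qed

lemma rat_edgeD:
  assumes "rational_fn G k" "e \<in> edges G" "e \<notin> legs G"
  shows "\<exists>P. finite P \<and> {0, len G e} \<subseteq> P \<and> P \<subseteq> {0..len G e} \<and>
        pw_affine_int P (\<lambda>t. k (epos G e t))"
proof -
  have "\<forall>e\<in>edges G - legs G. \<exists>P. finite P \<and> {0, len G e} \<subseteq> P \<and> P \<subseteq> {0..len G e} \<and>
        pw_affine_int P (\<lambda>t. k (epos G e t))" using assms(1) unfolding rational_fn_def by (rule conjunct1)
  moreover have "e \<in> edges G - legs G" using assms(2,3) by simp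
  ultimately show ?thesis by (rule bspec)
qed

lemma rat_legD:
  assumes "rational_fn G k" "l \<in> legs G"
  obtains P c m where "finite P" "0 \<in> P" "P \<subseteq> {0..}" "pw_affine_int P (\<lambda>t. k (epos G l t))"
    "\<forall>t\<in>{Max P..}. k (epos G l t) = c + of_int (m::int) * t"
    "((\<lambda>t. k (epos G l t)) \<longlongrightarrow> k (Vx (tgt G l))) at_top"
proof -
  have "\<forall>l\<in>legs G. \<exists>P. finite P \<and> 0 \<in> P \<and> P \<subseteq> {0..} \<and>
        pw_affine_int P (\<lambda>t. k (epos G l t)) \<and>
        (\<exists>c (m::int). \<forall>t\<in>{Max P..}. k (epos G l t) = c + of_int m * t) \<and>
        ((\<lambda>t. k (epos G l t)) \<longlongrightarrow> k (Vx (tgt G l))) at_top"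
    using assms(1) unfolding rational_fn_def by (rule conjunct2)
  from bspec[OF this assms(2)] obtain P where P0: "finite P \<and> 0 \<in> P \<and> P \<subseteq> {0..} \<and> pw_affine_int P (\<lambda>t. k (epos G l t)) \<and>
      (\<exists>c (m::int). \<forall>t\<in>{Max P..}. k (epos G l t) = c + of_int m * t) \<and>
      ((\<lambda>t. k (epos G l t)) \<longlongrightarrow> k (Vx (tgt G l))) at_top"
    by (rule exE)
  have P: "finite P" "0 \<in> P" "P \<subseteq> {0..}" "pw_affine_int P (\<lambda>t. k (epos G l t))"
      "\<exists>c (m::int). \<forall>t\<in>{Max P..}. k (epos G l t) = c + of_int m * t"
      "((\<lambda>t. k (epos G l t)) \<longlongrightarrow> k (Vx (tgt G l))) at_top"
    using P0 by simp_all
  from P(5) obtain c m where "\<forall>t\<in>{Max P..}. k (epos G l t) = c + of_int (m::int) * t" by (elim exE)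
  then show ?thesis by (rule that[OF P(1-4) _ P(6)])
qed

lemma rat_leg:
  assumes "rational_fn G k" "l \<in> legs G"
  shows "\<exists>P c. finite P \<and> 0 \<in> P \<and> P \<subseteq> {0..} \<and> pw_affine_int P (\<lambda>t. k (epos G l t)) \<and>
      (\<forall>t\<in>{Max P..}. k (epos G l t) = c) \<and> ((\<lambda>t. k (epos G l t)) \<longlongrightarrow> k (Vx (tgt G l))) at_top"
proof -
  obtain P c m where P: "finite P" "0 \<in> P" "P \<subseteq> {0..}" "pw_affine_int P (\<lambda>t. k (epos G l t))"
    and cm: "\<forall>t\<in>{Max P..}. k (epos G l t) = c + of_int (m::int) * t"
    and lim: "((\<lambda>t. k (epos G l t)) \<longlongrightarrow> k (Vx (tgt G l))) at_top"
    by (rule rat_legD[OF assms])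
  have "real_of_int m = 0" by (rule lin_tendsto_slope0[OF cm lim])
  then have cc: "\<forall>t\<in>{Max P..}. k (epos G l t) = c" using cm by simp
  show ?thesis by (rule exI[of _ P], rule exI[of _ c], intro conjI; fact)
qed

lemma slope_top0:
  assumes "\<forall>t\<in>{M..}. g t = c"
  shows "slope_at_top g = 0"
  unfolding slope_at_top_def
proof (rule the_equality)
  have "(g has_real_derivative 0) (at t)" if "t > M" for t
    by (rule has_field_derivative_transform_within_open[OF DERIV_const, where S="{M<..}"]) (use that assms in auto)
  then show "\<forall>\<^sub>F t in at_top. (g has_real_derivative 0) (at t)"
    unfolding eventually_at_top_linorder by (intro exI[of _ "M+1"]) auto
next
  fix m assume "\<forall>\<^sub>F t in at_top. (g has_real_derivative m) (at t)"
  moreover have "\<forall>\<^sub>F t in at_top. (g has_real_derivative 0) (at t)"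
  proof -
    have "(g has_real_derivative 0) (at t)" if "t > M" for t
      by (rule has_field_derivative_transform_within_open[OF DERIV_const, where S="{M<..}"]) (use that assms in auto)
    then show ?thesis unfolding eventually_at_top_linorder by (intro exI[of _ "M+1"]) auto
  qed
  ultimately have ev: "\<forall>\<^sub>F t in at_top. (g has_real_derivative m) (at t) \<and> (g has_real_derivative 0) (at t)"
    by (rule eventually_conj)
  have "\<exists>t. (g has_real_derivative m) (at t) \<and> (g has_real_derivative 0) (at t)"
    by (rule eventually_happens'[OF _ ev]) simp
  then obtain t where "(g has_real_derivative m) (at t)" "(g has_real_derivative 0) (at t)"
    by blast
  then show "m = 0" by (rule DERIV_unique)
qed

lemma rat_slope_top:
  assumes "rational_fn G k" "l \<in> legs G"
  shows "slope_at_top (\<lambda>t. k (epos G l t)) = 0"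
proof -
  obtain P c where "\<forall>t\<in>{Max P..}. k (epos G l t) = c" using rat_leg[OF assms] by blast
  then show ?thesis by (rule slope_top0)
qed

lemma rat_Q:
  assumes tc: "trop_curve G" and k: "rational_fn G k" and e: "e \<in> edges G"
  shows "\<exists>P. finite P \<and> 0 \<in> P \<and> P \<subseteq> Srng G e \<and> Qp (\<lambda>t. k (epos G e t)) (Srng G e) P"
proof (cases "e \<in> legs G")
  case True
  obtain P c m where P: "finite P" "0 \<in> P" "P \<subseteq> {0..}" "pw_affine_int P (\<lambda>t. k (epos G e t))"
    and cm: "\<forall>t\<in>{Max P..}. k (epos G e t) = c + of_int (m::int) * t"
    by (rule rat_legD[OF k True])
  have "aff (\<lambda>t. k (epos G e t)) {Max P..}" unfolding aff_def using cm by blast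
  then have "Qp (\<lambda>t. k (epos G e t)) {0..} P" by (rule pw_Qp_leg[OF P])
  then show ?thesis using P True by (auto simp: Srng_def)
next
  case False
  obtain P where P: "finite P" "{0, len G e} \<subseteq> P" "P \<subseteq> {0..len G e}" "pw_affine_int P (\<lambda>t. k (epos G e t))"
    using rat_edgeD[OF k e False] by blast
  have "Qp (\<lambda>t. k (epos G e t)) {0..len G e} P" by (rule pw_Qp_edge[OF P])
  then show ?thesis using P False by (auto simp: Srng_def)
qed

lemma rat_rd:
  assumes tc: "trop_curve G" and k: "rational_fn G k" and e: "e \<in> edges G"
    and t: "0 \<le> t" "e \<in> legs G \<or> t < len G e"
  shows "\<exists>m::int. rd (\<lambda>t. k (epos G e t)) t (of_int m)"
proof -
  obtain P where P: "finite P" "Qp (\<lambda>t. k (epos G e t)) (Srng G e) P" using rat_Q[OF tc k e] by blast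
  define s where "s = (if e \<in> legs G then t + 1 else len G e)"
  have "t \<in> Srng G e" "t < s" "{t..s} \<subseteq> Srng G e" using t by (auto simp: Srng_def s_def)
  then show ?thesis by (rule Qp_right[OF P])
qed

lemma rat_ld:
  assumes tc: "trop_curve G" and k: "rational_fn G k" and e: "e \<in> edges G"
    and t: "0 < t" "e \<in> legs G \<or> t \<le> len G e"
  shows "\<exists>m::int. ld (\<lambda>t. k (epos G e t)) t (of_int m)"
proof -
  obtain P where P: "finite P" "Qp (\<lambda>t. k (epos G e t)) (Srng G e) P" using rat_Q[OF tc k e] by blast
  have "t \<in> Srng G e" "0 < t" "{0..t} \<subseteq> Srng G e" using t by (auto simp: Srng_def)
  then show ?thesis by (rule Qp_left[OF P])
qed

lemma rat_mid:
  assumes tc: "trop_curve G" and k: "rational_fn G k" and e: "e \<in> edges G"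
  shows "\<exists>P. finite P \<and> (\<forall>t. 0 < t \<and> (e \<in> legs G \<or> t < len G e) \<and> t \<notin> P \<longrightarrow>
     (\<exists>m::int. rd (\<lambda>t. k (epos G e t)) t (of_int m) \<and> ld (\<lambda>t. k (epos G e t)) t (of_int m)))"
proof -
  obtain P where P: "finite P" "Qp (\<lambda>t. k (epos G e t)) (Srng G e) P" using rat_Q[OF tc k e] by blast
  show ?thesis
  proof (intro exI[of _ P] conjI allI impI)
    fix t assume t: "0 < t \<and> (e \<in> legs G \<or> t < len G e) \<and> t \<notin> P"
    define s where "s = (if e \<in> legs G then t + 1 else len G e)"
    have "t \<notin> P" "0 < t" "t < s" "{0..s} \<subseteq> Srng G e" using t by (auto simp: Srng_def s_def)
    then show "\<exists>m::int. rd (\<lambda>t. k (epos G e t)) t (of_int m) \<and> ld (\<lambda>t. k (epos G e t)) t (of_int m)"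
      by (rule Qp_mid[OF P])
  qed (rule P(1))
qed



lemma ld_rslope_refl: "ld u a m \<Longrightarrow> rslope (\<lambda>s. u (a - s)) 0 = - m"
  using rd_rslope[OF ld_reflect[of u a m a]] by simp

lemma ld_rd_refl0: "ld u a m \<Longrightarrow> rd (\<lambda>s. u (a - s)) 0 (- m)"
  using ld_reflect[of u a m a] by simp

lemma lap_Ed_eq:
  assumes "rd (\<lambda>s. k (epos G e s)) t m1" "ld (\<lambda>s. k (epos G e s)) t m2"
  shows "lap G k (Ed e t) = m1 - m2"
proof -
  have "rslope (\<lambda>s. k (epos G e s)) t = m1" by (rule rd_rslope[OF assms(1)])
  moreover have "rslope (\<lambda>s. k (epos G e (- s))) (- t) = - m2"
    using rd_rslope[OF ld_reflect0[OF assms(2)]] by simp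
  ultimately show ?thesis by simp
qed

lemma lap_Vx_src_int:
  assumes tc: "trop_curve G" and k: "rational_fn G k" and e: "e \<in> edges G"
  shows "rslope (\<lambda>t. k (epos G e t)) 0 \<in> \<int>"
proof -
  have "e \<in> legs G \<or> 0 < len G e" using tc_len[OF tc e] by blast
  then obtain m :: int where "rd (\<lambda>t. k (epos G e t)) 0 (of_int m)" using rat_rd[OF tc k e, of 0] by auto
  then show ?thesis using rd_rslope by simp
qed

lemma lap_Vx_tgt_int:
  assumes tc: "trop_curve G" and k: "rational_fn G k" and e: "e \<in> edges G" "e \<notin> legs G"
  shows "rslope (\<lambda>s. k (epos G e (len G e - s))) 0 \<in> \<int>"
proof -
  have "0 < len G e" using tc_len[OF tc e] by blast
  then obtain m :: int where "ld (\<lambda>t. k (epos G e t)) (len G e) (of_int m)" using rat_ld[OF tc k e(1), of "len G e"] by auto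
  then show ?thesis using ld_rslope_refl[of "\<lambda>t. k (epos G e t)"] by simp
qed

lemma lap_int:
  assumes tc: "trop_curve G" and k: "rational_fn G k" and p: "p \<in> pts G"
  shows "lap G k p \<in> \<int>"
proof (cases p)
  case (Vx v)
  have s1: "(\<Sum>e\<in>{e\<in>edges G. src G e = v}. rslope (\<lambda>t. k (epos G e t)) 0) \<in> \<int>"
    by (rule Ints_sum) (use lap_Vx_src_int[OF tc k] in auto)
  have s2: "(\<Sum>e\<in>{e\<in>edges G - legs G. tgt G e = v}. rslope (\<lambda>s. k (epos G e (len G e - s))) 0) \<in> \<int>"
    by (rule Ints_sum) (use lap_Vx_tgt_int[OF tc k] in auto)
  have s3: "(\<Sum>l\<in>{l\<in>legs G. tgt G l = v}. - slope_at_top (\<lambda>t. k (epos G l t))) = 0"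
    by (rule sum.neutral) (use rat_slope_top[OF k] in auto)
  show ?thesis unfolding Vx using s1 s2 s3 by simp
next
  case (Ed e t)
  have h: "e \<in> edges G" "0 < t" "e \<in> legs G \<or> t < len G e" using p pts_Ed[OF tc] unfolding Ed by auto
  obtain m1 :: int where m1: "rd (\<lambda>s. k (epos G e s)) t (of_int m1)" using rat_rd[OF tc k h(1), of t] h by auto
  obtain m2 :: int where m2: "ld (\<lambda>s. k (epos G e s)) t (of_int m2)" using rat_ld[OF tc k h(1), of t] h by auto
  show ?thesis unfolding Ed lap_Ed_eq[OF m1 m2] by simp
qed

lemma rd_le_fun:
  assumes "rd (\<lambda>s. h (q s)) t mu" "rd (\<lambda>s. k (q s)) t mw" "k (q t) = h (q t)" "\<And>x. k x \<le> h x"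
  shows "mw \<le> mu"
  by (rule rd_le[OF assms(1,2)]) (use assms(3,4) in auto)

lemma lap_mono:
  assumes tc: "trop_curve G" and k: "rational_fn G k" and h: "rational_fn G h"
    and le: "\<And>x. k x \<le> h x" and p: "p \<in> pts G" and eq: "k p = h p"
  shows "lap G k p \<le> lap G h p"
proof (cases p)
  case (Vx v)
  have s1: "(\<Sum>e\<in>{e\<in>edges G. src G e = v}. rslope (\<lambda>t. k (epos G e t)) 0)
      \<le> (\<Sum>e\<in>{e\<in>edges G. src G e = v}. rslope (\<lambda>t. h (epos G e t)) 0)"
  proof (rule sum_mono)
    fix e assume "e \<in> {e\<in>edges G. src G e = v}"
    then have e: "e \<in> edges G" "src G e = v" by auto
    have "e \<in> legs G \<or> 0 < len G e" using tc_len[OF tc e(1)] by blast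
    then obtain mk :: int where mk: "rd (\<lambda>t. k (epos G e t)) 0 (of_int mk)" using rat_rd[OF tc k e(1), of 0] by auto
    have "e \<in> legs G \<or> 0 < len G e" using tc_len[OF tc e(1)] by blast
    then obtain mh :: int where mh: "rd (\<lambda>t. h (epos G e t)) 0 (of_int mh)" using rat_rd[OF tc h e(1), of 0] by auto
    have "k (epos G e 0) = h (epos G e 0)" using eq e by (simp add: Vx epos_0)
    then have "real_of_int mk \<le> of_int mh" by (intro rd_le[OF mh mk]) (simp_all add: le)
    then show "rslope (\<lambda>t. k (epos G e t)) 0 \<le> rslope (\<lambda>t. h (epos G e t)) 0"
      using rd_rslope[OF mk] rd_rslope[OF mh] by simp
  qed
  have s2: "(\<Sum>e\<in>{e\<in>edges G - legs G. tgt G e = v}. rslope (\<lambda>s. k (epos G e (len G e - s))) 0)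
      \<le> (\<Sum>e\<in>{e\<in>edges G - legs G. tgt G e = v}. rslope (\<lambda>s. h (epos G e (len G e - s))) 0)"
  proof (rule sum_mono)
    fix e assume "e \<in> {e\<in>edges G - legs G. tgt G e = v}"
    then have e: "e \<in> edges G" "e \<notin> legs G" "tgt G e = v" by auto
    have L: "0 < len G e" using tc_len[OF tc e(1,2)] .
    obtain mk :: int where mk: "ld (\<lambda>t. k (epos G e t)) (len G e) (of_int mk)" using rat_ld[OF tc k e(1), of "len G e"] L by auto
    obtain mh :: int where mh: "ld (\<lambda>t. h (epos G e t)) (len G e) (of_int mh)" using rat_ld[OF tc h e(1), of "len G e"] L by auto
    have rk: "rd (\<lambda>s. k (epos G e (len G e - s))) 0 (- of_int mk)" using ld_rd_refl0[OF mk] by simp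
    have rh: "rd (\<lambda>s. h (epos G e (len G e - s))) 0 (- of_int mh)" using ld_rd_refl0[OF mh] by simp
    have "k (epos G e (len G e - 0)) = h (epos G e (len G e - 0))"
      using eq e L by (simp add: Vx epos_len)
    then have "- real_of_int mk \<le> - of_int mh" by (intro rd_le[OF rh rk]) (simp_all add: le)
    then show "rslope (\<lambda>s. k (epos G e (len G e - s))) 0 \<le> rslope (\<lambda>s. h (epos G e (len G e - s))) 0"
      using rd_rslope[OF rk] rd_rslope[OF rh] by simp
  qed
  have s3k: "(\<Sum>l\<in>{l\<in>legs G. tgt G l = v}. - slope_at_top (\<lambda>t. k (epos G l t))) = 0"
    by (rule sum.neutral) (use rat_slope_top[OF k] in auto)
  have s3h: "(\<Sum>l\<in>{l\<in>legs G. tgt G l = v}. - slope_at_top (\<lambda>t. h (epos G l t))) = 0"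
    by (rule sum.neutral) (use rat_slope_top[OF h] in auto)
  show ?thesis unfolding Vx using s1 s2 s3k s3h by simp
next
  case (Ed e t)
  have hh: "e \<in> edges G" "0 < t" "e \<in> legs G \<or> t < len G e" using p pts_Ed[OF tc] unfolding Ed by auto
  have ep: "epos G e t = p" using hh by (simp add: Ed epos_Ed)
  obtain a1 :: int where a1: "rd (\<lambda>s. k (epos G e s)) t (of_int a1)" using rat_rd[OF tc k hh(1), of t] hh by auto
  obtain a2 :: int where a2: "ld (\<lambda>s. k (epos G e s)) t (of_int a2)" using rat_ld[OF tc k hh(1), of t] hh by auto
  obtain b1 :: int where b1: "rd (\<lambda>s. h (epos G e s)) t (of_int b1)" using rat_rd[OF tc h hh(1), of t] hh by auto
  obtain b2 :: int where b2: "ld (\<lambda>s. h (epos G e s)) t (of_int b2)" using rat_ld[OF tc h hh(1), of t] hh by auto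
  have "real_of_int a1 \<le> of_int b1" by (intro rd_le[OF b1 a1]) (simp_all add: le eq ep)
  moreover have "- real_of_int a2 \<le> - of_int b2"
  proof -
    have rk: "rd (\<lambda>s. k (epos G e (- s))) (- t) (- of_int a2)" using ld_reflect0[OF a2] by simp
    have rh: "rd (\<lambda>s. h (epos G e (- s))) (- t) (- of_int b2)" using ld_reflect0[OF b2] by simp
    show ?thesis by (intro rd_le[OF rh rk]) (simp_all add: le eq ep)
  qed
  ultimately show ?thesis unfolding Ed lap_Ed_eq[OF a1 a2] lap_Ed_eq[OF b1 b2] by simp
qed

lemma lap_support:
  assumes tc: "trop_curve G" and k: "rational_fn G k"
  shows "finite {p \<in> pts G. lap G k p \<noteq> 0}"
proof -
  have "\<forall>e\<in>edges G. \<exists>P. finite P \<and> (\<forall>t. 0 < t \<and> (e \<in> legs G \<or> t < len G e) \<and> t \<notin> P \<longrightarrow>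
     (\<exists>m::int. rd (\<lambda>t. k (epos G e t)) t (of_int m) \<and> ld (\<lambda>t. k (epos G e t)) t (of_int m)))"
    using rat_mid[OF tc k] by blast
  then obtain PP where PP: "\<And>e. e \<in> edges G \<Longrightarrow> finite (PP e)"
    "\<And>e t. e \<in> edges G \<Longrightarrow> 0 < t \<Longrightarrow> (e \<in> legs G \<or> t < len G e) \<Longrightarrow> t \<notin> PP e \<Longrightarrow>
     (\<exists>m::int. rd (\<lambda>t. k (epos G e t)) t (of_int m) \<and> ld (\<lambda>t. k (epos G e t)) t (of_int m))"
    by metis
  have fe: "finite (edges G)" "finite (verts G)" using tc unfolding trop_curve_def by auto
  have sub: "{p \<in> pts G. lap G k p \<noteq> 0} \<subseteq> Vx ` verts G \<union> (\<Union>e\<in>edges G. (\<lambda>t. Ed e t) ` PP e)"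
  proof
    fix p assume pp: "p \<in> {p \<in> pts G. lap G k p \<noteq> 0}"
    show "p \<in> Vx ` verts G \<union> (\<Union>e\<in>edges G. (\<lambda>t. Ed e t) ` PP e)"
    proof (cases p)
      case (Vx v)
      have "Vx v \<in> pts G" using pp Vx by simp
      then have "v \<in> verts G" by (simp add: pts_Vx)
      then show ?thesis using Vx by simp
    next
      case (Ed e t)
      have hh: "e \<in> edges G" "0 < t" "e \<in> legs G \<or> t < len G e" using pp pts_Ed[OF tc] unfolding Ed by auto
      have "t \<in> PP e"
      proof (rule ccontr)
        assume "t \<notin> PP e"
        then obtain m :: int where m: "rd (\<lambda>t. k (epos G e t)) t (of_int m)" "ld (\<lambda>t. k (epos G e t)) t (of_int m)"
          using PP(2)[OF hh] by blast
        have "lap G k p = 0" unfolding Ed lap_Ed_eq[OF m] by simp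
        then show False using pp by simp
      qed
      then show ?thesis using hh Ed by auto
    qed
  qed
  show ?thesis by (rule finite_subset[OF sub]) (use fe PP(1) in auto)
qed



lemma rsE:
  assumes "real_structure G R" "e \<in> edges G"
  shows "iedge R e \<in> edges G" "iedge R (iedge R e) = e" "flip R (iedge R e) = flip R e"
    "iedge R e \<in> legs G \<longleftrightarrow> e \<in> legs G" "len G (iedge R e) = len G e"
    "e \<in> legs G \<Longrightarrow> \<not> flip R e"
    "flip R e \<Longrightarrow> src G (iedge R e) = ivert R (tgt G e)"
    "flip R e \<Longrightarrow> tgt G (iedge R e) = ivert R (src G e)"
    "\<not> flip R e \<Longrightarrow> src G (iedge R e) = ivert R (src G e)"
    "\<not> flip R e \<Longrightarrow> tgt G (iedge R e) = ivert R (tgt G e)"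
proof -
  have A: "iedge R e \<in> edges G \<and> iedge R (iedge R e) = e \<and>
        flip R (iedge R e) = flip R e \<and>
        (iedge R e \<in> legs G \<longleftrightarrow> e \<in> legs G) \<and>
        len G (iedge R e) = len G e \<and>
        (e \<in> legs G \<longrightarrow> \<not> flip R e) \<and>
        (if flip R e
         then src G (iedge R e) = ivert R (tgt G e) \<and> tgt G (iedge R e) = ivert R (src G e)
         else src G (iedge R e) = ivert R (src G e) \<and> tgt G (iedge R e) = ivert R (tgt G e))"
    by (rule bspec[OF conjunct2[OF assms(1)[unfolded real_structure_def]] assms(2)])
  then show "iedge R e \<in> edges G" "iedge R (iedge R e) = e" "flip R (iedge R e) = flip R e"
    "iedge R e \<in> legs G \<longleftrightarrow> e \<in> legs G" "len G (iedge R e) = len G e"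
    "e \<in> legs G \<Longrightarrow> \<not> flip R e"
    "flip R e \<Longrightarrow> src G (iedge R e) = ivert R (tgt G e)"
    "flip R e \<Longrightarrow> tgt G (iedge R e) = ivert R (src G e)"
    "\<not> flip R e \<Longrightarrow> src G (iedge R e) = ivert R (src G e)"
    "\<not> flip R e \<Longrightarrow> tgt G (iedge R e) = ivert R (tgt G e)"
    by (simp_all split: if_splits)
qed

lemma rsV:
  assumes "real_structure G R" "v \<in> verts G"
  shows "ivert R v \<in> verts G" "ivert R (ivert R v) = v"
proof -
  have "ivert R v \<in> verts G \<and> ivert R (ivert R v) = v"
    by (rule bspec[OF conjunct1[OF assms(1)[unfolded real_structure_def]] assms(2)])
  then show "ivert R v \<in> verts G" "ivert R (ivert R v) = v" by simp_all
qed

lemma iota_epos_nf: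
  assumes rs: "real_structure G R" and e: "e \<in> edges G" and nf: "\<not> flip R e"
  shows "iota G R (epos G e t) = epos G (iedge R e) t"
proof -
  note r = rsE[OF rs e]
  show ?thesis
  proof (cases "t = 0")
    case True then show ?thesis using r nf by (simp add: epos_def)
  next
    case False
    show ?thesis
    proof (cases "e \<notin> legs G \<and> t = len G e")
      case True then show ?thesis using r nf False by (simp add: epos_def)
    next
      case F2: False
      then have "epos G e t = Ed e t" using False by (simp add: epos_def)
      moreover have "epos G (iedge R e) t = Ed (iedge R e) t" using False F2 r by (simp add: epos_def)
      ultimately show ?thesis using nf by simp
    qed
  qed
qed

lemma iota_epos_f:
  assumes tc: "trop_curve G" and rs: "real_structure G R" and e: "e \<in> edges G" and f: "flip R e"
  shows "iota G R (epos G e t) = epos G (iedge R e) (len G e - t)"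
proof -
  note r = rsE[OF rs e]
  have nl: "e \<notin> legs G" "iedge R e \<notin> legs G" using r f by auto
  have L: "len G e > 0" using tc_len[OF tc e nl(1)] .
  show ?thesis
  proof (cases "t = 0")
    case True then show ?thesis using r f nl L by (simp add: epos_def)
  next
    case False
    show ?thesis
    proof (cases "t = len G e")
      case True then show ?thesis using r f nl L by (simp add: epos_def)
    next
      case F2: False
      then have "epos G e t = Ed e t" using False by (simp add: epos_def)
      moreover have "epos G (iedge R e) (len G e - t) = Ed (iedge R e) (len G e - t)"
        using False F2 r nl by (simp add: epos_def)
      ultimately show ?thesis using f by simp
    qed
  qed
qed

lemma iota_iota_epos:
  assumes tc: "trop_curve G" and rs: "real_structure G R" and e: "e \<in> edges G"
  shows "iota G R (iota G R (epos G e t)) = epos G e t"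
proof -
  note r = rsE[OF rs e]
  note r2 = rsE[OF rs r(1)]
  show ?thesis
  proof (cases "flip R e")
    case True
    have "iota G R (iota G R (epos G e t)) = iota G R (epos G (iedge R e) (len G e - t))"
      by (simp add: iota_epos_f[OF tc rs e True])
    also have "\<dots> = epos G e (len G (iedge R e) - (len G e - t))"
      using iota_epos_f[OF tc rs r(1)] True r by simp
    finally show ?thesis using r by simp
  next
    case False
    have "iota G R (iota G R (epos G e t)) = iota G R (epos G (iedge R e) t)"
      by (simp add: iota_epos_nf[OF rs e False])
    also have "\<dots> = epos G e t"
      using iota_epos_nf[OF rs r(1)] False r by simp
    finally show ?thesis .
  qed
qed



lemma rational_iota:
  assumes tc: "trop_curve G" and rs: "real_structure G R" and k: "rational_fn G k"
  shows "rational_fn G (\<lambda>x. k (iota G R x))"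
  unfolding rational_fn_def
proof (intro conjI ballI)
  fix e assume eE: "e \<in> edges G - legs G"
  then have e: "e \<in> edges G" "e \<notin> legs G" by auto
  note r = rsE[OF rs e(1)]
  have e': "iedge R e \<in> edges G" "iedge R e \<notin> legs G" using r e by auto
  obtain P where P: "finite P" "{0, len G (iedge R e)} \<subseteq> P" "P \<subseteq> {0..len G (iedge R e)}"
      "pw_affine_int P (\<lambda>t. k (epos G (iedge R e) t))"
    using rat_edgeD[OF k e'] by blast
  show "\<exists>P. finite P \<and> {0, len G e} \<subseteq> P \<and> P \<subseteq> {0..len G e} \<and>
          pw_affine_int P (\<lambda>t. k (iota G R (epos G e t)))"
  proof (cases "flip R e")
    case False
    have "(\<lambda>t. k (iota G R (epos G e t))) = (\<lambda>t. k (epos G (iedge R e) t))"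
      using iota_epos_nf[OF rs e(1) False] by simp
    have "{0, len G e} \<subseteq> P" "P \<subseteq> {0..len G e}" using P(2,3) r(5) by simp_all
    then show ?thesis unfolding \<open>(\<lambda>t. k (iota G R (epos G e t))) = (\<lambda>t. k (epos G (iedge R e) t))\<close>
      using P(1,4) by (intro exI[of _ P] conjI) assumption+
  next
    case True
    have fe: "(\<lambda>t. k (iota G R (epos G e t))) = (\<lambda>t. (\<lambda>t. k (epos G (iedge R e) t)) (len G e - t))"
      using iota_epos_f[OF tc rs e(1) True] by simp
    define P' where "P' = (\<lambda>t. len G e - t) ` P"
    have "pw_affine_int P' (\<lambda>t. (\<lambda>t. k (epos G (iedge R e) t)) (len G e - t))"
      unfolding P'_def by (rule pw_reflect[OF P(4)])
    moreover have "finite P'" unfolding P'_def using P(1) by simp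
    moreover have "{0, len G e} \<subseteq> P'"
    proof -
      have a: "len G e \<in> P" and b: "0 \<in> P" using P(2) r(5) by auto
      have "len G e - len G e \<in> P'" unfolding P'_def using a by (rule imageI)
      moreover have "len G e - 0 \<in> P'" unfolding P'_def using b by (rule imageI)
      ultimately have "0 \<in> P'" "len G e \<in> P'" by simp_all
      then show ?thesis by simp
    qed
    moreover have "P' \<subseteq> {0..len G e}" using P(3) r(5) unfolding P'_def by auto
    ultimately show ?thesis unfolding fe by (intro exI[of _ P'] conjI) assumption+
  qed
next
  fix l assume l: "l \<in> legs G"
  have lE: "l \<in> edges G" using l tc_legs[OF tc] by auto
  note r = rsE[OF rs lE]
  have nf: "\<not> flip R l" using r(6) l by simp
  have l': "iedge R l \<in> legs G" using r l by simp
  obtain P c m where P: "finite P" "0 \<in> P" "P \<subseteq> {0..}" "pw_affine_int P (\<lambda>t. k (epos G (iedge R l) t))"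
    "\<forall>t\<in>{Max P..}. k (epos G (iedge R l) t) = c + of_int (m::int) * t"
    "((\<lambda>t. k (epos G (iedge R l) t)) \<longlongrightarrow> k (Vx (tgt G (iedge R l)))) at_top"
    by (rule rat_legD[OF k l'])
  have fe: "\<And>t. k (iota G R (epos G l t)) = k (epos G (iedge R l) t)"
    using iota_epos_nf[OF rs lE nf] by simp
  have tv: "k (iota G R (Vx (tgt G l))) = k (Vx (tgt G (iedge R l)))" using r nf by simp
  show "\<exists>P. finite P \<and> 0 \<in> P \<and> P \<subseteq> {0..} \<and>
          pw_affine_int P (\<lambda>t. k (iota G R (epos G l t))) \<and>
          (\<exists>c (m::int). \<forall>t\<in>{Max P..}. k (iota G R (epos G l t)) = c + of_int m * t) \<and>
          ((\<lambda>t. k (iota G R (epos G l t))) \<longlongrightarrow> k (iota G R (Vx (tgt G l)))) at_top"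
    unfolding fe tv using P by (intro exI[of _ P] exI[of _ c] exI[of _ m] conjI) assumption+
qed



lemma rational_max:
  assumes tc: "trop_curve G" and f: "rational_fn G f" and g: "rational_fn G g"
  shows "rational_fn G (\<lambda>x. max (f x) (g x))"
  unfolding rational_fn_def
proof (intro conjI ballI)
  fix e assume eE: "e \<in> edges G - legs G"
  then have e: "e \<in> edges G" "e \<notin> legs G" by auto
  obtain P1 where P1: "finite P1" "{0, len G e} \<subseteq> P1" "P1 \<subseteq> {0..len G e}" "pw_affine_int P1 (\<lambda>t. f (epos G e t))"
    using rat_edgeD[OF f e] by blast
  obtain P2 where P2: "finite P2" "{0, len G e} \<subseteq> P2" "P2 \<subseteq> {0..len G e}" "pw_affine_int P2 (\<lambda>t. g (epos G e t))"
    using rat_edgeD[OF g e] by blast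
  have Q1: "Qp (\<lambda>t. f (epos G e t)) {0..len G e} (P1 \<union> P2)"
    by (rule Qp_mono[OF pw_Qp_edge[OF P1]]) simp
  have Q2: "Qp (\<lambda>t. g (epos G e t)) {0..len G e} (P1 \<union> P2)"
    by (rule Qp_mono[OF pw_Qp_edge[OF P2]]) simp
  obtain C where C: "finite C" "C \<subseteq> {0..len G e}"
    "Qp (\<lambda>t. max (f (epos G e t)) (g (epos G e t))) {0..len G e} (P1 \<union> P2 \<union> C)"
    using Qp_max[OF _ Q1 Q2, of 0] P1 P2 by auto
  show "\<exists>P. finite P \<and> {0, len G e} \<subseteq> P \<and> P \<subseteq> {0..len G e} \<and>
          pw_affine_int P (\<lambda>t. max (f (epos G e t)) (g (epos G e t)))"
  proof (intro exI[of _ "P1 \<union> P2 \<union> C"] conjI)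
    show "pw_affine_int (P1 \<union> P2 \<union> C) (\<lambda>t. max (f (epos G e t)) (g (epos G e t)))"
      by (rule Qp_pw[OF C(3)]) (use P1 P2 C in auto)
  qed (use P1 P2 C in auto)
next
  fix l assume l: "l \<in> legs G"
  obtain P1 c1 where P1: "finite P1" "0 \<in> P1" "P1 \<subseteq> {0..}" "pw_affine_int P1 (\<lambda>t. f (epos G l t))"
      "\<forall>t\<in>{Max P1..}. f (epos G l t) = c1" "((\<lambda>t. f (epos G l t)) \<longlongrightarrow> f (Vx (tgt G l))) at_top"
    using rat_leg[OF f l] by blast
  obtain P2 c2 where P2: "finite P2" "0 \<in> P2" "P2 \<subseteq> {0..}" "pw_affine_int P2 (\<lambda>t. g (epos G l t))"
      "\<forall>t\<in>{Max P2..}. g (epos G l t) = c2" "((\<lambda>t. g (epos G l t)) \<longlongrightarrow> g (Vx (tgt G l))) at_top"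
    using rat_leg[OF g l] by blast
  have a1: "aff (\<lambda>t. f (epos G l t)) {Max P1..}" unfolding aff_def
    by (rule exI[of _ c1], rule exI[of _ 0]) (use P1(5) in simp)
  have a2: "aff (\<lambda>t. g (epos G l t)) {Max P2..}" unfolding aff_def
    by (rule exI[of _ c2], rule exI[of _ 0]) (use P2(5) in simp)
  have Q1: "Qp (\<lambda>t. f (epos G l t)) {0..} (P1 \<union> P2)"
    by (rule Qp_mono[OF pw_Qp_leg[OF P1(1-4) a1]]) simp
  have Q2: "Qp (\<lambda>t. g (epos G l t)) {0..} (P1 \<union> P2)"
    by (rule Qp_mono[OF pw_Qp_leg[OF P2(1-4) a2]]) simp
  obtain C where C: "finite C" "C \<subseteq> {0..}"
    "Qp (\<lambda>t. max (f (epos G l t)) (g (epos G l t))) {0..} (P1 \<union> P2 \<union> C)"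
    using Qp_max[OF _ Q1 Q2, of 0] P1 P2 by auto
  define P where "P = P1 \<union> P2 \<union> C"
  have fP: "finite P" using P1 P2 C by (simp add: P_def)
  have M1: "Max P1 \<le> Max P" using fP P1 by (intro Max_mono) (auto simp: P_def)
  have M2: "Max P2 \<le> Max P" using fP P2 by (intro Max_mono) (auto simp: P_def)
  have aff: "\<forall>t\<in>{Max P..}. max (f (epos G l t)) (g (epos G l t)) = max c1 c2 + of_int (0::int) * t"
    using P1(5) P2(5) M1 M2 by auto
  show "\<exists>P. finite P \<and> 0 \<in> P \<and> P \<subseteq> {0..} \<and>
          pw_affine_int P (\<lambda>t. max (f (epos G l t)) (g (epos G l t))) \<and>
          (\<exists>c (m::int). \<forall>t\<in>{Max P..}. max (f (epos G l t)) (g (epos G l t)) = c + of_int m * t) \<and>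
          ((\<lambda>t. max (f (epos G l t)) (g (epos G l t))) \<longlongrightarrow> max (f (Vx (tgt G l))) (g (Vx (tgt G l)))) at_top"
  proof (intro exI[of _ P] conjI)
    show "pw_affine_int P (\<lambda>t. max (f (epos G l t)) (g (epos G l t)))"
      unfolding P_def by (rule Qp_pw[OF C(3)]) (use P1 P2 C in auto)
    show "\<exists>c (m::int). \<forall>t\<in>{Max P..}. max (f (epos G l t)) (g (epos G l t)) = c + of_int m * t"
      using aff by blast
    show "((\<lambda>t. max (f (epos G l t)) (g (epos G l t))) \<longlongrightarrow> max (f (Vx (tgt G l))) (g (Vx (tgt G l)))) at_top"
      by (rule tendsto_max[OF P1(6) P2(6)])
  qed (use fP P1 P2 C in \<open>auto simp: P_def\<close>)
qed



definition phi :: "('v, 'e, 'z) tgraph_scheme \<Rightarrow> (('v, 'e) point \<Rightarrow> real) \<Rightarrow> 'e \<times> bool \<Rightarrow> real" where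
  "phi G k eb = (if snd eb then rslope (\<lambda>s. k (epos G (fst eb) (len G (fst eb) - s))) 0
                 else rslope (\<lambda>t. k (epos G (fst eb) t)) 0)"

definition HE :: "('v, 'e, 'z) tgraph_scheme \<Rightarrow> 'v \<Rightarrow> ('e \<times> bool) set" where
  "HE G v = (\<lambda>e. (e, False)) ` {e\<in>edges G. src G e = v} \<union> (\<lambda>e. (e, True)) ` {e\<in>edges G - legs G. tgt G e = v}"

lemma lapV_split:
  assumes fin: "finite (edges G)"
  shows "lap G k (Vx v) = sum (phi G k) (HE G v) + (\<Sum>l\<in>{l\<in>legs G. tgt G l = v}. - slope_at_top (\<lambda>t. k (epos G l t)))"
proof -
  have f1: "finite {e\<in>edges G. src G e = v}" "finite {e\<in>edges G - legs G. tgt G e = v}" using fin by auto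
  have d: "(\<lambda>e. (e, False)) ` {e\<in>edges G. src G e = v} \<inter> (\<lambda>e. (e, True)) ` {e\<in>edges G - legs G. tgt G e = v} = {}"
    by auto
  have "sum (phi G k) (HE G v) = sum (phi G k) ((\<lambda>e. (e, False)) ` {e\<in>edges G. src G e = v})
      + sum (phi G k) ((\<lambda>e. (e, True)) ` {e\<in>edges G - legs G. tgt G e = v})"
    unfolding HE_def by (rule sum.union_disjoint) (use f1 d in auto)
  also have "sum (phi G k) ((\<lambda>e. (e, False)) ` {e\<in>edges G. src G e = v}) =
     (\<Sum>e\<in>{e\<in>edges G. src G e = v}. rslope (\<lambda>t. k (epos G e t)) 0)"
    by (subst sum.reindex) (auto simp: inj_on_def phi_def)
  also have "sum (phi G k) ((\<lambda>e. (e, True)) ` {e\<in>edges G - legs G. tgt G e = v}) =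
     (\<Sum>e\<in>{e\<in>edges G - legs G. tgt G e = v}. rslope (\<lambda>s. k (epos G e (len G e - s))) 0)"
    by (subst sum.reindex) (auto simp: inj_on_def phi_def)
  finally show ?thesis by simp
qed

lemma phi_iota:
  assumes tc: "trop_curve G" and rs: "real_structure G R" and e: "e \<in> edges G"
    and b: "b \<Longrightarrow> e \<notin> legs G"
  shows "phi G (\<lambda>x. k (iota G R x)) (e, b) = phi G k (iedge R e, b \<noteq> flip R e)"
proof -
  note r = rsE[OF rs e]
  show ?thesis
  proof (cases "flip R e")
    case True
    have fe: "\<And>t. k (iota G R (epos G e t)) = k (epos G (iedge R e) (len G e - t))"
      using iota_epos_f[OF tc rs e True] by simp
    show ?thesis
    proof (cases b)
      case True
      have "(\<lambda>s. k (epos G (iedge R e) (len G e - (len G e - s)))) = (\<lambda>s. k (epos G (iedge R e) s))" by simp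
      then show ?thesis using True \<open>flip R e\<close> by (simp add: phi_def fe)
    next
      case False
      then show ?thesis using \<open>flip R e\<close> r(5) by (simp add: phi_def fe)
    qed
  next
    case False
    have fe: "\<And>t. k (iota G R (epos G e t)) = k (epos G (iedge R e) t)"
      using iota_epos_nf[OF rs e False] by simp
    show ?thesis using False r(5) by (cases b) (simp_all add: phi_def fe)
  qed
qed

lemma lap_iota:
  assumes tc: "trop_curve G" and rs: "real_structure G R" and p: "p \<in> pts G"
  shows "lap G (\<lambda>x. k (iota G R x)) p = lap G k (iota G R p)"
proof (cases p)
  case (Vx v)
  have v: "v \<in> verts G" using p Vx by (simp add: pts_Vx)
  note rv = rsV[OF rs v]
  have fin: "finite (edges G)" using tc unfolding trop_curve_def by blast
  have s12: "sum (phi G (\<lambda>x. k (iota G R x))) (HE G v) = sum (phi G k) (HE G (ivert R v))"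
  proof (rule sum.reindex_bij_witness[where i="\<lambda>(e,b). (iedge R e, b \<noteq> flip R e)" and j="\<lambda>(e,b). (iedge R e, b \<noteq> flip R e)"])
    fix a assume a: "a \<in> HE G v"
    obtain e b where ab: "a = (e, b)" by (cases a)
    have e: "e \<in> edges G" and bl: "b \<Longrightarrow> e \<notin> legs G" and sv: "\<not> b \<Longrightarrow> src G e = v" and tv: "b \<Longrightarrow> tgt G e = v"
      using a ab unfolding HE_def by auto
    note r = rsE[OF rs e]
    show "(case case a of (e, b) \<Rightarrow> (iedge R e, b \<noteq> flip R e) of (e, b) \<Rightarrow> (iedge R e, b \<noteq> flip R e)) = a"
      using ab r by auto
    show "(case a of (e, b) \<Rightarrow> (iedge R e, b \<noteq> flip R e)) \<in> HE G (ivert R v)"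
    proof (cases b; cases "flip R e")
      assume "b" "flip R e" then show ?thesis using ab r e bl tv unfolding HE_def by auto
    next
      assume "b" "\<not> flip R e" then show ?thesis using ab r e bl tv unfolding HE_def by auto
    next
      assume "\<not> b" "flip R e"
      then have "e \<notin> legs G" using r(6) by auto
      then show ?thesis using ab r e sv \<open>\<not> b\<close> \<open>flip R e\<close> unfolding HE_def by auto
    next
      assume "\<not> b" "\<not> flip R e" then show ?thesis using ab r e sv unfolding HE_def by auto
    qed
    show "phi G k (case a of (e, b) \<Rightarrow> (iedge R e, b \<noteq> flip R e)) = phi G (\<lambda>x. k (iota G R x)) a"
      using phi_iota[OF tc rs e bl] ab by simp
  next
    fix a assume a: "a \<in> HE G (ivert R v)"
    obtain e b where ab: "a = (e, b)" by (cases a)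
    have e: "e \<in> edges G" and bl: "b \<Longrightarrow> e \<notin> legs G" and sv: "\<not> b \<Longrightarrow> src G e = ivert R v"
        and tv: "b \<Longrightarrow> tgt G e = ivert R v"
      using a ab unfolding HE_def by auto
    note r = rsE[OF rs e]
    show "(case case a of (e, b) \<Rightarrow> (iedge R e, b \<noteq> flip R e) of (e, b) \<Rightarrow> (iedge R e, b \<noteq> flip R e)) = a"
      using ab r by auto
    show "(case a of (e, b) \<Rightarrow> (iedge R e, b \<noteq> flip R e)) \<in> HE G v"
    proof (cases b; cases "flip R e")
      assume "b" "flip R e" then show ?thesis using ab r e bl tv rv unfolding HE_def by auto
    next
      assume "b" "\<not> flip R e" then show ?thesis using ab r e bl tv rv unfolding HE_def by auto
    next
      assume "\<not> b" "flip R e"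
      then have "e \<notin> legs G" using r(6) by auto
      then show ?thesis using ab r e sv rv \<open>\<not> b\<close> \<open>flip R e\<close> unfolding HE_def by auto
    next
      assume "\<not> b" "\<not> flip R e" then show ?thesis using ab r e sv rv unfolding HE_def by auto
    qed
  qed
  have s3: "(\<Sum>l\<in>{l\<in>legs G. tgt G l = v}. - slope_at_top (\<lambda>t. k (iota G R (epos G l t))))
      = (\<Sum>l\<in>{l\<in>legs G. tgt G l = ivert R v}. - slope_at_top (\<lambda>t. k (epos G l t)))"
  proof (rule sum.reindex_bij_witness[where i="iedge R" and j="iedge R"])
    fix l assume l: "l \<in> {l\<in>legs G. tgt G l = v}"
    have lE: "l \<in> edges G" using l tc_legs[OF tc] by auto
    note r = rsE[OF rs lE]
    have nf: "\<not> flip R l" using r(6) l by simp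
    show "iedge R (iedge R l) = l" using r by simp
    show "iedge R l \<in> {l\<in>legs G. tgt G l = ivert R v}" using r nf l by simp
    have fe: "\<And>t. k (iota G R (epos G l t)) = k (epos G (iedge R l) t)"
      using iota_epos_nf[OF rs lE nf] by simp
    show "- slope_at_top (\<lambda>t. k (epos G (iedge R l) t)) = - slope_at_top (\<lambda>t. k (iota G R (epos G l t)))"
      by (simp only: fe)
  next
    fix l assume l: "l \<in> {l\<in>legs G. tgt G l = ivert R v}"
    have lE: "l \<in> edges G" using l tc_legs[OF tc] by auto
    note r = rsE[OF rs lE]
    have nf: "\<not> flip R l" using r(6) l by simp
    show "iedge R (iedge R l) = l" using r by simp
    show "iedge R l \<in> {l\<in>legs G. tgt G l = v}" using r nf l rv by simp
  qed
  have l1: "lap G (\<lambda>x. k (iota G R x)) (Vx v) = sum (phi G (\<lambda>x. k (iota G R x))) (HE G v) +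
     (\<Sum>l\<in>{l\<in>legs G. tgt G l = v}. - slope_at_top (\<lambda>t. k (iota G R (epos G l t))))"
    by (rule lapV_split[OF fin])
  have l2: "lap G k (Vx (ivert R v)) = sum (phi G k) (HE G (ivert R v)) +
     (\<Sum>l\<in>{l\<in>legs G. tgt G l = ivert R v}. - slope_at_top (\<lambda>t. k (epos G l t)))"
    by (rule lapV_split[OF fin])
  have "iota G R p = Vx (ivert R v)" using Vx by simp
  then show ?thesis unfolding Vx using l1 l2 s12 s3 by (simp only:)
next
  case (Ed e t)
  have hh: "e \<in> edges G" "0 < t" "e \<in> legs G \<or> t < len G e" using p pts_Ed[OF tc] unfolding Ed by auto
  note r = rsE[OF rs hh(1)]
  show ?thesis
  proof (cases "flip R e")
    case False
    have fe: "\<And>t. k (iota G R (epos G e t)) = k (epos G (iedge R e) t)"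
      using iota_epos_nf[OF rs hh(1) False] by simp
    show ?thesis unfolding Ed using False by (simp add: fe)
  next
    case True
    define e' where "e' = iedge R e"
    define L where "L = len G e"
    have fe: "\<And>t. k (iota G R (epos G e t)) = k (epos G e' (L - t))"
      using iota_epos_f[OF tc rs hh(1) True] by (simp add: e'_def L_def)
    have i: "iota G R (Ed e t) = Ed e' (L - t)" using True by (simp add: e'_def L_def)
    have t1: "rslope (\<lambda>s. k (iota G R (epos G e s))) t = rslope (\<lambda>s. k (epos G e' (- s))) (- (L - t))"
    proof -
      have "rslope (\<lambda>s. k (iota G R (epos G e s))) t = rslope (\<lambda>s. (\<lambda>s. k (epos G e' (- s))) (s + - L)) t"
        by (simp add: fe)
      also have "\<dots> = rslope (\<lambda>s. k (epos G e' (- s))) (t + - L)" by (rule rslope_shift)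
      finally show ?thesis by simp
    qed
    have t2: "rslope (\<lambda>s. k (iota G R (epos G e (- s)))) (- t) = rslope (\<lambda>s. k (epos G e' s)) (L - t)"
    proof -
      have "rslope (\<lambda>s. k (iota G R (epos G e (- s)))) (- t) = rslope (\<lambda>s. (\<lambda>s. k (epos G e' s)) (s + L)) (- t)"
      proof (rule arg_cong[where f="\<lambda>u. rslope u (- t)"], rule ext)
        fix s show "k (iota G R (epos G e (- s))) = k (epos G e' (s + L))"
          using fe[of "- s"] by (simp add: algebra_simps)
      qed
      also have "\<dots> = rslope (\<lambda>s. k (epos G e' s)) (- t + L)" by (rule rslope_shift)
      finally show ?thesis by simp
    qed
    show ?thesis unfolding Ed i using t1 t2 by simp
  qed
qed

lemma lap_cong:
  assumes tc: "trop_curve G" and p: "p \<in> pts G"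
    and eq: "\<And>e s. e \<in> edges G \<Longrightarrow> k1 (epos G e s) = k2 (epos G e s)"
  shows "lap G k1 p = lap G k2 p"
proof (cases p)
  case (Vx v)
  have a: "(\<Sum>e\<in>{e\<in>edges G. src G e = v}. rslope (\<lambda>t. k1 (epos G e t)) 0) =
        (\<Sum>e\<in>{e\<in>edges G. src G e = v}. rslope (\<lambda>t. k2 (epos G e t)) 0)"
    by (rule sum.cong) (auto simp: eq)
  have b: "(\<Sum>e\<in>{e\<in>edges G - legs G. tgt G e = v}. rslope (\<lambda>s. k1 (epos G e (len G e - s))) 0) =
        (\<Sum>e\<in>{e\<in>edges G - legs G. tgt G e = v}. rslope (\<lambda>s. k2 (epos G e (len G e - s))) 0)"
    by (rule sum.cong) (auto simp: eq)
  have c: "(\<Sum>l\<in>{l\<in>legs G. tgt G l = v}. - slope_at_top (\<lambda>t. k1 (epos G l t))) =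
        (\<Sum>l\<in>{l\<in>legs G. tgt G l = v}. - slope_at_top (\<lambda>t. k2 (epos G l t)))"
    by (rule sum.cong) (use tc_legs[OF tc] in \<open>auto simp: eq\<close>)
  show ?thesis unfolding Vx using a b c by simp
next
  case (Ed e t)
  have e: "e \<in> edges G" using p pts_Ed[OF tc] unfolding Ed by auto
  show ?thesis unfolding Ed by (simp add: eq[OF e])
qed

lemma iota_pts:
  assumes tc: "trop_curve G" and rs: "real_structure G R" and p: "p \<in> pts G"
  shows "iota G R p \<in> pts G"
proof (cases p)
  case (Vx v)
  then show ?thesis using p rsV[OF rs] by (simp add: pts_Vx)
next
  case (Ed e t)
  have hh: "e \<in> edges G" "0 < t" "e \<in> legs G \<or> t < len G e" using p pts_Ed[OF tc] unfolding Ed by auto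
  note r = rsE[OF rs hh(1)]
  show ?thesis
  proof (cases "flip R e")
    case True
    then have "e \<notin> legs G" using r(6) by auto
    then show ?thesis unfolding Ed using True hh r by (simp add: pts_Ed[OF tc])
  next
    case False
    then show ?thesis unfolding Ed using hh r by (simp add: pts_Ed[OF tc])
  qed
qed



lemma deg_sum:
  assumes "finite {p. D p \<noteq> 0}" "finite A" "{p. D p \<noteq> 0} \<subseteq> A"
  shows "deg D = sum D A"
  unfolding deg_def by (rule sum.mono_neutral_left) (use assms in auto)

lemma eff_deg0:
  assumes "finite {p. D p \<noteq> 0}" "effective D" "deg D = 0"
  shows "D p = 0"
proof (rule ccontr)
  assume np: "D p \<noteq> 0"
  have "sum D {p. D p \<noteq> 0} = 0" using assms(3) unfolding deg_def .
  then have "\<forall>x\<in>{p. D p \<noteq> 0}. D x = 0"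
    using sum_nonneg_eq_0_iff[OF assms(1), of D] assms(2) unfolding effective_def by auto
  then show False using np by auto
qed

definition covers :: "('v, 'e, 'z) tgraph_scheme \<Rightarrow> ('v, 'e) divisor \<Rightarrow> nat \<Rightarrow> bool" where
  "covers G D n \<longleftrightarrow> (\<forall>E. is_divisor G E \<and> effective E \<and> deg E = int n \<longrightarrow> (\<exists>D'\<in>linsys G D. \<forall>p. E p \<le> D' p))"

lemma covers_0:
  assumes "linsys G D \<noteq> {}" shows "covers G D 0"
  unfolding covers_def
proof (intro allI impI)
  fix E assume E: "is_divisor G E \<and> effective E \<and> deg E = int 0"
  obtain D' where D': "D' \<in> linsys G D" using assms by blast
  have "E p = 0" for p by (rule eff_deg0) (use E in \<open>auto simp: is_divisor_def\<close>)
  moreover have "effective D'" using D' unfolding linsys_def by simp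
  ultimately show "\<exists>D'\<in>linsys G D. \<forall>p. E p \<le> D' p" using D' unfolding effective_def by auto
qed

lemma covers_down:
  fixes G :: "('v, 'e, 'z) tgraph_scheme"
  assumes tc: "trop_curve G" and c: "covers G D (Suc n)"
  shows "covers G D n"
  unfolding covers_def
proof (intro allI impI)
  fix E assume E: "is_divisor G E \<and> effective E \<and> deg E = int n"
  obtain v0 where v0: "v0 \<in> verts G" using tc unfolding trop_curve_def by blast
  define q :: "('v, 'e) point" where "q = Vx v0"
  have qp: "q \<in> pts G" using v0 by (simp add: q_def pts_Vx)
  define E' where "E' = (\<lambda>p. E p + (if p = q then 1 else 0))"
  have fE: "finite {p. E p \<noteq> 0}" "{p. E p \<noteq> 0} \<subseteq> pts G" using E unfolding is_divisor_def by auto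
  define A where "A = {p. E p \<noteq> 0} \<union> {q}"
  have fA: "finite A" using fE by (simp add: A_def)
  have sE': "{p. E' p \<noteq> 0} \<subseteq> A" by (auto simp: A_def E'_def)
  have fE': "finite {p. E' p \<noteq> 0}" using fA sE' finite_subset by blast
  have dE: "deg E = sum E A" by (rule deg_sum[OF fE(1) fA]) (auto simp: A_def)
  have "deg E' = sum E' A" by (rule deg_sum[OF fE' fA sE'])
  also have "\<dots> = sum E A + sum (\<lambda>p. if p = q then 1 else 0) A" unfolding E'_def by (rule sum.distrib)
  also have "sum (\<lambda>p. if p = q then (1::int) else 0) A = 1" using fA by (simp add: A_def)
  finally have dE': "deg E' = int (Suc n)" using E dE by simp
  have "is_divisor G E'" unfolding is_divisor_def using fE' sE' fE qp by (auto simp: A_def)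
  moreover have "effective E'" using E unfolding effective_def E'_def by (auto simp: add_nonneg_nonneg)
  ultimately obtain D' where D': "D' \<in> linsys G D" "\<forall>p. E' p \<le> D' p"
    using c dE' unfolding covers_def by blast
  have "\<forall>p. E p \<le> D' p"
  proof
    fix p have "E p \<le> E' p" by (simp add: E'_def)
    then show "E p \<le> D' p" using D'(2) by (meson order_trans)
  qed
  then show "\<exists>D'\<in>linsys G D. \<forall>p. E p \<le> D' p" using D'(1) by blast
qed

lemma covers_down_add:
  assumes tc: "trop_curve G" shows "covers G D (n + k) \<Longrightarrow> covers G D n"
proof (induction k)
  case 0 then show ?case by simp
next
  case (Suc k) then show ?case using covers_down[OF tc, of D "n + k"] by simp
qed

lemma dim_cover:
  assumes tc: "trop_curve G" and d: "int r \<le> div_dim G D"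
  shows "covers G D r"
proof -
  have ne: "linsys G D \<noteq> {}"
  proof
    assume "linsys G D = {}"
    then have "div_dim G D = -1" unfolding div_dim_def by simp
    then show False using d by simp
  qed
  have dd: "div_dim G D = int (Greatest (covers G D))"
    using ne unfolding div_dim_def covers_def by simp
  show ?thesis
  proof (cases "\<exists>b. \<forall>y. covers G D y \<longrightarrow> y \<le> b")
    case True
    then obtain b where b: "\<And>y. covers G D y \<Longrightarrow> y \<le> b" by blast
    have g: "covers G D (Greatest (covers G D))" by (rule GreatestI_nat[where P="covers G D", OF covers_0[OF ne] b])
    have "r \<le> Greatest (covers G D)" using d dd by simp
    then obtain k where "Greatest (covers G D) = r + k" using le_Suc_ex by blast
    then show ?thesis using covers_down_add[OF tc] g by metis
  next
    case False
    then obtain y where y: "covers G D y" "\<not> y \<le> r" by blast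
    then obtain k where "y = r + k" using le_Suc_ex[of r y] by auto
    then show ?thesis using covers_down_add[OF tc] y by metis
  qed
qed



theorem proposition6:
  fixes G :: "('v, 'e) tgraph" and R :: "('v, 'e) rstruct"
    and D :: "('v, 'e) divisor" and r :: nat
  assumes "trop_curve G"
    and "real_structure G R"
    and "is_divisor G D" and "real_divisor G R D"
    and "1 \<le> r" and "int r \<le> div_dim G D"
  shows "\<forall>E. is_divisor G E \<and> effective E \<and> real_divisor G R E \<and> deg E = int r \<longrightarrow>
           (\<exists>D'\<in>linsys G D. real_divisor G R D' \<and> (\<forall>p. E p \<le> D' p))"
proof (intro allI impI)
  note tc = assms(1) and rs = assms(2) and Ddiv = assms(3) and Dreal = assms(4)
  fix E assume E: "is_divisor G E \<and> effective E \<and> real_divisor G R E \<and> deg E = int r"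
  have cov: "covers G D r" by (rule dim_cover[OF tc assms(6)])
  obtain D1 where D1: "D1 \<in> linsys G D" "\<forall>p. E p \<le> D1 p"
    using cov E unfolding covers_def by blast
  have D1e: "effective D1" and D1l: "lin_equiv G D D1" using D1(1) unfolding linsys_def by auto
  obtain f where f: "rational_fn G f" and fl: "\<And>p. p \<in> pts G \<Longrightarrow> real_of_int (D1 p - D p) = lap G f p"
    using D1l unfolding lin_equiv_def by blast
  define g where "g = (\<lambda>x. f (iota G R x))"
  define h where "h = (\<lambda>x. max (f x) (g x))"
  have g: "rational_fn G g" unfolding g_def by (rule rational_iota[OF tc rs f])
  have h: "rational_fn G h" unfolding h_def by (rule rational_max[OF tc f g])
  define D3 where "D3 = (\<lambda>p. if p \<in> pts G then D p + \<lfloor>lap G h p\<rfloor> else 0)"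
  have hint: "real_of_int \<lfloor>lap G h p\<rfloor> = lap G h p" if "p \<in> pts G" for p
    using lap_int[OF tc h that] by (simp add: Ints_def)
  have D3r: "real_of_int (D3 p) = real_of_int (D p) + lap G h p" if p: "p \<in> pts G" for p
  proof -
    have "D3 p = D p + \<lfloor>lap G h p\<rfloor>" using p by (simp add: D3_def)
    then have "real_of_int (D3 p) = real_of_int (D p) + real_of_int \<lfloor>lap G h p\<rfloor>" by (simp only: of_int_add)
    then show ?thesis unfolding hint[OF p] .
  qed
  have Dr: "D (iota G R p) = D p" if "p \<in> pts G" for p
    using Dreal that unfolding real_divisor_def conj_div_def by simp
  have Er: "E (iota G R p) = E p" if "p \<in> pts G" for p
    using E that unfolding real_divisor_def conj_div_def by simp
  have main: "real_of_int (D1 p) \<le> real_of_int (D3 p) \<or> real_of_int (D1 (iota G R p)) \<le> real_of_int (D3 p)"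
    if p: "p \<in> pts G" for p
  proof (cases "g p \<le> f p")
    case True
    have "lap G f p \<le> lap G h p"
      by (rule lap_mono[OF tc f h]) (use True p in \<open>auto simp: h_def\<close>)
    then have "real_of_int (D1 p) \<le> real_of_int (D3 p)"
      using fl[OF p] D3r[OF p] by simp
    then show ?thesis by blast
  next
    case False
    have ip: "iota G R p \<in> pts G" by (rule iota_pts[OF tc rs p])
    have "lap G g p \<le> lap G h p"
      by (rule lap_mono[OF tc g h]) (use False p in \<open>auto simp: h_def\<close>)
    moreover have "lap G g p = lap G f (iota G R p)" unfolding g_def by (rule lap_iota[OF tc rs p])
    ultimately have "real_of_int (D1 (iota G R p)) \<le> real_of_int (D3 p)"
      using fl[OF ip] D3r[OF p] Dr[OF p] by simp
    then show ?thesis by blast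
  qed
  have ge: "E p \<le> D3 p \<and> 0 \<le> D3 p" for p
  proof (cases "p \<in> pts G")
    case False
    have "E p = 0" using E False unfolding is_divisor_def by auto
    then show ?thesis using False by (simp add: D3_def)
  next
    case True
    have e1: "E p \<le> D1 p" "0 \<le> D1 p" using D1(2) D1e unfolding effective_def by auto
    have e2: "E p \<le> D1 (iota G R p)" "0 \<le> D1 (iota G R p)"
      using D1(2)[rule_format, of "iota G R p"] D1e Er[OF True] unfolding effective_def by auto
    from main[OF True] show ?thesis
    proof
      assume "real_of_int (D1 p) \<le> real_of_int (D3 p)"
      then have "D1 p \<le> D3 p" by simp
      then show ?thesis using e1 by simp
    next
      assume "real_of_int (D1 (iota G R p)) \<le> real_of_int (D3 p)"
      then have "D1 (iota G R p) \<le> D3 p" by simp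
      then show ?thesis using e2 by simp
    qed
  qed
  have D3div: "is_divisor G D3"
  proof -
    have "{p. D3 p \<noteq> 0} \<subseteq> {p. D p \<noteq> 0} \<union> {p \<in> pts G. lap G h p \<noteq> 0}"
    proof
      fix p assume "p \<in> {p. D3 p \<noteq> 0}"
      then have p: "p \<in> pts G" "D p + \<lfloor>lap G h p\<rfloor> \<noteq> 0" by (auto simp: D3_def split: if_splits)
      show "p \<in> {p. D p \<noteq> 0} \<union> {p \<in> pts G. lap G h p \<noteq> 0}"
      proof (cases "lap G h p = 0")
        case True then show ?thesis using p by simp
      next
        case False then show ?thesis using p by simp
      qed
    qed
    moreover have "finite ({p. D p \<noteq> 0} \<union> {p \<in> pts G. lap G h p \<noteq> 0})"
      using Ddiv lap_support[OF tc h] unfolding is_divisor_def by simp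
    ultimately have "finite {p. D3 p \<noteq> 0}" by (rule finite_subset)
    moreover have "{p. D3 p \<noteq> 0} \<subseteq> pts G" by (auto simp: D3_def split: if_splits)
    ultimately show ?thesis unfolding is_divisor_def by simp
  qed
  have D3eq: "lin_equiv G D D3" unfolding lin_equiv_def
  proof (intro exI[of _ h] conjI ballI)
    show "rational_fn G h" by (rule h)
    fix p assume p: "p \<in> pts G"
    show "real_of_int (D3 p - D p) = lap G h p" using D3r[OF p] by simp
  qed
  have D3real: "real_divisor G R D3" unfolding real_divisor_def conj_div_def
  proof
    fix p assume p: "p \<in> pts G"
    have ip: "iota G R p \<in> pts G" by (rule iota_pts[OF tc rs p])
    have "lap G h (iota G R p) = lap G (\<lambda>x. h (iota G R x)) p" by (rule lap_iota[OF tc rs p, symmetric])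
    also have "\<dots> = lap G h p"
    proof (rule lap_cong[OF tc p])
      fix e s assume e: "e \<in> edges G"
      show "h (iota G R (epos G e s)) = h (epos G e s)"
        unfolding h_def g_def using iota_iota_epos[OF tc rs e, of s] by (simp add: max.commute)
    qed
    finally have "lap G h (iota G R p) = lap G h p" .
    then show "D3 (iota G R p) = D3 p" using ip p Dr[OF p] by (simp add: D3_def)
  qed
  have "D3 \<in> linsys G D" unfolding linsys_def effective_def using D3div D3eq ge by auto
  then show "\<exists>D'\<in>linsys G D. real_divisor G R D' \<and> (\<forall>p. E p \<le> D' p)"
    using D3real ge by blast
qed



end
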